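(* Consider the symmetric Markov process and the associated quantities described in the context (satisfying Assumptions (A), (B), (C), (D) and the ergodicity condition (E$_s$)). Define \[F(t)=\sum_{j=1}^{K(c+1)}\gamma_j\sum_{n_0=0}^\infty\sum_{m=0}^c\beta_{0,j}^{n_0}\,\omega_j(m)\,F_{n_0,m}(t),\qquad t\ge0.\] Then \[F(t)=\sum_{j=1}^{K(c+1)}\frac{\gamma_j\,\omega_j\mathbf 1}{1-\beta_{0,j}}\exp\Bigl(t\sum_{i=1}^K\Bigl(1-\frac{1}{\beta_{0,j}^{\,i}}\Bigr)\lambda_i\Bigr),\qquad t\ge0,\] where $\omega_j=(\omega_j(0),\dots,\omega_j(c))$ and $\mathbf 1$ is the column vector of $c+1$ ones.
   Context: Fix integers $c\ge1$, $K\ge1$. Consider an irreducible continuous-time Markov process on $V\cup W$, $V$ finite, $W=\{\mathbf n=(n_0,\dots,n_c): n_0\in\{0,1,\dots\},\ n_i\in\{0,1\}\}$, which is symmetric: there are nonnegative rates $a_k,b_k,c_k,d_k$ ($k\le K$ integer), the same for every $i$. From $\mathbf n\in W$, for each $i\in\{1,\dots,c\}$ and $k\in\{-n_0,\dots,K\}$, it jumps (changing only coordinates $0$ and $i$) from $(n_0,n_i)=(n_0,0)$ to $(n_0+k,1)$ at rate $a_k$ and to $(n_0+k,0)$ at rate $b_k$, and from $(n_0,1)$ to $(n_0+k,1)$ at rate $c_k$ and to $(n_0+k,0)$ at rate $d_k$; from $\mathbf n$ it jumps into $V$ with total rate $\sum_i\sum_{k\le-n_0-1}((1-n_i)(a_k+b_k)+n_i(c_k+d_k))$;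 no other transitions leave $W$; from $V$ no transitions go to states with $n_0\ge K$. Let $A(z)=\sum_{k\le K}a_kz^{K-k}$, similarly $B,C,D$; $F(z)=z^K(A(1)+B(1)-C(1)-D(1))-B(z)+C(z)$; for $|z|<1$ let $R(z)$ be a fixed square root of $F(z)^2+4A(z)D(z)$. Assumption (A): (i) $A(1),B(1),C(1),D(1)<\infty$; (ii) $A(1),D(1)>0$; (iii) $A'(1),B'(1),C'(1),D'(1)<\infty$; (iv) $a_K=0$ or $d_K=0$; (v) $b_K=c_K\ne0$. Ergodicity (E$_s$): $0<D(1)(A'(1)-KA(1)+B'(1)-KB(1))+A(1)(C'(1)-KC(1)+D'(1)-KD(1))$. For $\eta\in[-1,1]$ let $(\mathrm S_\eta)$ be the equation $\eta R(\beta_0)=B(\beta_0)+C(\beta_0)-\beta_0^K(A(1)+B(1)+C(1)+D(1))$. Assumptions (B),(C): for every $\eta\in\{(c-2k)/c:k=0,\dots,c\}$ and every root $\beta_0$ of $(\mathrm S_\eta)$ with $|\beta_0|<1$: $F(\beta_0)^2+4A(\beta_0)D(\beta_0)\ne0$ and $D(\beta_0)\ne0$. Aggregated representation: with $p$ the equilibrium distribution and $p(n_0,m)=\sum_{\mathbf n\in W:\ n_1+\dots+n_c=m}p(\mathbf n)$, let $(\eta^{(j)},\beta_{0,j})$, $j=1,\dots,K(c+1)$, be the pairs with $\eta^{(j)}\in\{(c-2k)/c:k=0,\dots,c\}$ and $\beta_{0,j}$ a root of $(\mathrm S_{\eta^{(j)}})$ with $|\beta_{0,j}|<1$; pick $x^{(j)}\in\{-1,1\}^c$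 with $-\frac1c\sum_ix^{(j)}_i=\eta^{(j)}$, let $\beta_{i,j}=(F(\beta_{0,j})+x^{(j)}_iR(\beta_{0,j}))/(2D(\beta_{0,j}))$ and $\omega_j(m)=\sum_{n_i\in\{0,1\},\,n_1+\dots+n_c=m}\prod_{i=1}^c\beta_{i,j}^{n_i}$. The constants $\gamma_j$ are the (complex) constants with $p(n_0,m)=\sum_{j=1}^{K(c+1)}\gamma_j\beta_{0,j}^{n_0}\omega_j(m)$ for all $n_0\ge0$, $m=0,\dots,c$. Level matrices: for integers $k\le K$ define $(c+1)\times(c+1)$ matrices $\Lambda_k$ indexed by $m,m'\in\{0,\dots,c\}$ with $\Lambda_k(m,m+1)=a_k(c-m)$, $\Lambda_k(m,m-1)=d_km$, $\Lambda_k(m,m)=b_k(c-m)+c_km$ for $k\ne0$, and for $k=0$ the same off-diagonal entries but $\Lambda_0(m,m)=b_0(c-m)+c_0m-\sum_{k\le K}\bigl((a_k+b_k)(c-m)+(c_k+d_k)m\bigr)$; all other entries $0$. Assumption (D): $\Lambda_i=\lambda_iI$ for $i=1,\dots,K$, for some $\lambda_i\ge0$. First passage: for $n_0\ge0$, $m\in\{0,\dots,c\}$, let $F_{n_0,m}(t)$ be the probability that the first passage time to $V$ exceeds $t$, for the aggregated process $(n_0,m)$ (where $m=n_1+\dots+n_c$) started at $(n_0,m)$ at time $0$ in which all transitions in the positive $n_0$-direction (those with rates $a_k,b_k,c_k,d_k$, $k>0$) are suppressed for $t\ge0$; equivalently, $F_{n_0}(t)=(F_{n_0,0}(t),\dots,F_{n_0,c}(t))^T$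 solves $F_{n_0}'(t)=\sum_{i=0}^K\Lambda_iF_{n_0}(t)+\sum_{k=1}^{n_0}\Lambda_{-k}F_{n_0-k}(t)$, $F_{n_0}(0)=\mathbf 1$. *)

theory Defs
  imports "HOL-Analysis.Analysis"
begin

text \<open>States: Inl v for v in the finite set V, and Inr (n0, n) for the states of W,
  where n :: nat => bool encodes (n_1,...,n_c) in {0,1}^c (n i = True iff n_i = 1),
  with n i = False outside {1..c}. Rates a_k, b_k, c_k, d_k (k <= K) are the
  functions ra, rb, rc, rd :: int => real.\<close>

type_synonym 'v st = "'v + nat \<times> (nat \<Rightarrow> bool)"

definition Wset :: "nat \<Rightarrow> (nat \<times> (nat \<Rightarrow> bool)) set" where
  "Wset c = {(n0, n). \<forall>i. n i \<longrightarrow> i \<in> {1..c}}"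

definition Sset :: "'v set \<Rightarrow> nat \<Rightarrow> 'v st set" where
  "Sset V c = Inl ` V \<union> Inr ` Wset c"

definition crate :: "(int \<Rightarrow> real) \<Rightarrow> (int \<Rightarrow> real) \<Rightarrow> (int \<Rightarrow> real) \<Rightarrow> (int \<Rightarrow> real)
    \<Rightarrow> bool \<Rightarrow> bool \<Rightarrow> int \<Rightarrow> real" where
  "crate ra rb rc rd ni e k =
     (if \<not> ni then (if e then ra k else rb k) else (if e then rc k else rd k))"

definition Wrate :: "nat \<Rightarrow> nat \<Rightarrow> (int \<Rightarrow> real) \<Rightarrow> (int \<Rightarrow> real) \<Rightarrow> (int \<Rightarrow> real)
    \<Rightarrow> (int \<Rightarrow> real) \<Rightarrow> nat \<times> (nat \<Rightarrow> bool) \<Rightarrow> nat \<times> (nat \<Rightarrow> bool) \<Rightarrow> real" where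
  "Wrate c K ra rb rc rd w w' =
     (\<Sum>i\<in>{1..c}. \<Sum>k\<in>{- int (fst w)..int K}. \<Sum>e\<in>(UNIV::bool set).
        (if w' = (nat (int (fst w) + k), (snd w)(i := e))
         then crate ra rb rc rd (snd w i) e k else 0))"

definition Vrate :: "nat \<Rightarrow> (int \<Rightarrow> real) \<Rightarrow> (int \<Rightarrow> real) \<Rightarrow> (int \<Rightarrow> real)
    \<Rightarrow> (int \<Rightarrow> real) \<Rightarrow> nat \<times> (nat \<Rightarrow> bool) \<Rightarrow> real" where
  "Vrate c ra rb rc rd w =
     (\<Sum>i\<in>{1..c}. if snd w i
        then infsum (\<lambda>k. rc k + rd k) {..- int (fst w) - 1}
        else infsum (\<lambda>k. ra k + rb k) {..- int (fst w) - 1})"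

definition sym_process :: "nat \<Rightarrow> nat \<Rightarrow> (int \<Rightarrow> real) \<Rightarrow> (int \<Rightarrow> real) \<Rightarrow> (int \<Rightarrow> real)
    \<Rightarrow> (int \<Rightarrow> real) \<Rightarrow> 'v set \<Rightarrow> ('v st \<Rightarrow> 'v st \<Rightarrow> real) \<Rightarrow> bool" where
  "sym_process c K ra rb rc rd V q \<longleftrightarrow>
     finite V \<and>
     (\<forall>x\<in>Sset V c. \<forall>y\<in>Sset V c. x \<noteq> y \<longrightarrow> 0 \<le> q x y) \<and>
     (\<forall>w\<in>Wset c. \<forall>w'\<in>Wset c. w \<noteq> w' \<longrightarrow> q (Inr w) (Inr w') = Wrate c K ra rb rc rd w w') \<and>
     (\<forall>w\<in>Wset c. (\<Sum>v\<in>V. q (Inr w) (Inl v)) = Vrate c ra rb rc rd w) \<and>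
     (\<forall>v\<in>V. \<forall>w\<in>Wset c. K \<le> fst w \<longrightarrow> q (Inl v) (Inr w) = 0)"

definition irreducible_on :: "'s set \<Rightarrow> ('s \<Rightarrow> 's \<Rightarrow> real) \<Rightarrow> bool" where
  "irreducible_on S q \<longleftrightarrow>
     (\<forall>x\<in>S. \<forall>y\<in>S. (x, y) \<in> {(u, v). u \<in> S \<and> v \<in> S \<and> u \<noteq> v \<and> 0 < q u v}\<^sup>*)"

definition equilibrium :: "'s set \<Rightarrow> ('s \<Rightarrow> 's \<Rightarrow> real) \<Rightarrow> ('s \<Rightarrow> real) \<Rightarrow> bool" where
  "equilibrium S q p \<longleftrightarrow>
     (\<forall>x\<in>S. 0 \<le> p x) \<and> (p has_sum 1) S \<and>
     (\<forall>y\<in>S. ((q y) summable_on (S - {y})) \<and>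
        ((\<lambda>x. p x * q x y) has_sum (p y * infsum (q y) (S - {y}))) (S - {y}))"

definition pagg :: "nat \<Rightarrow> ('v st \<Rightarrow> real) \<Rightarrow> nat \<Rightarrow> nat \<Rightarrow> real" where
  "pagg c p n0 m = (\<Sum>I\<in>{I. I \<subseteq> {1..c} \<and> card I = m}. p (Inr (n0, (\<lambda>i. i \<in> I))))"

text \<open>A(z) = sum_{k<=K} a_k z^(K-k); A(1), and A'(1) = sum_{k<=K} (K-k) a_k.\<close>
definition genf :: "nat \<Rightarrow> (int \<Rightarrow> real) \<Rightarrow> complex \<Rightarrow> complex" where
  "genf K a z = infsum (\<lambda>k. complex_of_real (a k) * z ^ nat (int K - k)) {..int K}"

definition genf1 :: "nat \<Rightarrow> (int \<Rightarrow> real) \<Rightarrow> real" where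
  "genf1 K a = infsum a {..int K}"

definition dgenf1 :: "nat \<Rightarrow> (int \<Rightarrow> real) \<Rightarrow> real" where
  "dgenf1 K a = infsum (\<lambda>k. real_of_int (int K - k) * a k) {..int K}"

definition Fz :: "nat \<Rightarrow> (int \<Rightarrow> real) \<Rightarrow> (int \<Rightarrow> real) \<Rightarrow> (int \<Rightarrow> real) \<Rightarrow> (int \<Rightarrow> real)
    \<Rightarrow> complex \<Rightarrow> complex" where
  "Fz K ra rb rc rd z = z ^ K * complex_of_real (genf1 K ra + genf1 K rb - genf1 K rc - genf1 K rd)
     - genf K rb z + genf K rc z"

definition etaset :: "nat \<Rightarrow> real set" where
  "etaset c = {(real c - 2 * real k) / real c | k. k \<le> c}"

definition S_eq :: "nat \<Rightarrow> (int \<Rightarrow> real) \<Rightarrow> (int \<Rightarrow> real) \<Rightarrow> (int \<Rightarrow> real) \<Rightarrow> (int \<Rightarrow> real)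
    \<Rightarrow> (complex \<Rightarrow> complex) \<Rightarrow> real \<Rightarrow> complex \<Rightarrow> bool" where
  "S_eq K ra rb rc rd R \<eta> \<beta> \<longleftrightarrow>
     complex_of_real \<eta> * R \<beta> = genf K rb \<beta> + genf K rc \<beta>
       - \<beta> ^ K * complex_of_real (genf1 K ra + genf1 K rb + genf1 K rc + genf1 K rd)"

definition rootpairs :: "nat \<Rightarrow> nat \<Rightarrow> (int \<Rightarrow> real) \<Rightarrow> (int \<Rightarrow> real) \<Rightarrow> (int \<Rightarrow> real)
    \<Rightarrow> (int \<Rightarrow> real) \<Rightarrow> (complex \<Rightarrow> complex) \<Rightarrow> (real \<times> complex) set" where
  "rootpairs c K ra rb rc rd R =
     {(\<eta>, \<beta>). \<eta> \<in> etaset c \<and> cmod \<beta> < 1 \<and> S_eq K ra rb rc rd R \<eta> \<beta>}"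

definition omega :: "nat \<Rightarrow> (nat \<Rightarrow> complex) \<Rightarrow> nat \<Rightarrow> complex" where
  "omega c \<beta> m = (\<Sum>I\<in>{I. I \<subseteq> {1..c} \<and> card I = m}. \<Prod>i\<in>I. \<beta> i)"

definition Lam :: "nat \<Rightarrow> nat \<Rightarrow> (int \<Rightarrow> real) \<Rightarrow> (int \<Rightarrow> real) \<Rightarrow> (int \<Rightarrow> real)
    \<Rightarrow> (int \<Rightarrow> real) \<Rightarrow> int \<Rightarrow> nat \<Rightarrow> nat \<Rightarrow> real" where
  "Lam c K ra rb rc rd k m m' =
     (if m' = m + 1 then ra k * (real c - real m)
      else if m' + 1 = m then rd k * real m
      else if m' = m then
        rb k * (real c - real m) + rc k * real m
        - (if k = 0 then infsum (\<lambda>l. (ra l + rb l) * (real c - real m) + (rc l + rd l) * real m)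
                            {..int K} else 0)
      else 0)"

end

theory Submission
  imports Defs
begin

lemma alg_step:
  fixes A B C D P Q b \<sigma> n k u0 u1 u2 um :: complex
  assumes h1: "A*(n - (k+1) + 1)*u0 + D*(k+2)*u2 + ((B-P)*(n-(k+1)) + (C-Q)*(k+1))*u1 = \<sigma>*u1"
   and h0: "A*(n - k + 1)*um + D*(k+1)*u1 + ((B-P)*(n-k) + (C-Q)*k)*u0 = \<sigma>*u0"
   and qa: "D*b^2 = (P-Q-B+C)*b + A"
  shows "A*((n+1) - (k+1) + 1)*(u0 + b*um) + D*(k+2)*(u2 + b*u1) + ((B-P)*((n+1)-(k+1)) + (C-Q)*(k+1))*(u1+b*u0) = (\<sigma> + (D*b+B-P))*(u1 + b*u0)"
proof -
  have "A*((n+1) - (k+1) + 1)*(u0 + b*um) + D*(k+2)*(u2 + b*u1) + ((B-P)*((n+1)-(k+1)) + (C-Q)*(k+1))*(u1+b*u0) - (\<sigma> + (D*b+B-P))*(u1 + b*u0)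
    = (A*(n - (k+1) + 1)*u0 + D*(k+2)*u2 + ((B-P)*(n-(k+1)) + (C-Q)*(k+1))*u1 - \<sigma>*u1)
      + b * (A*(n - k + 1)*um + D*(k+1)*u1 + ((B-P)*(n-k) + (C-Q)*k)*u0 - \<sigma>*u0)
      - u0 * (D*b^2 - ((P-Q-B+C)*b + A))"
    by (simp add: algebra_simps power2_eq_square)
  also have "\<dots> = 0" using h1 h0 qa by simp
  finally show ?thesis by simp
qed


definition om :: "nat set \<Rightarrow> (nat \<Rightarrow> complex) \<Rightarrow> nat \<Rightarrow> complex" where
  "om S \<beta> m = (\<Sum>I\<in>{I. I \<subseteq> S \<and> card I = m}. \<Prod>i\<in>I. \<beta> i)"

lemma om_empty: "om {} \<beta> m = (if m = 0 then 1 else 0)"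
proof -
  have e: "{I. I \<subseteq> {} \<and> card I = m} = (if m = 0 then {{}} else {})" by (cases m) auto
  show ?thesis unfolding om_def e by simp
qed

lemma om_zero: "finite S \<Longrightarrow> om S \<beta> 0 = 1"
proof -
  assume fS: "finite S"
  have "{I. I \<subseteq> S \<and> card I = 0} = {{}}" using fS by (auto dest: finite_subset)
  then show ?thesis unfolding om_def by simp
qed

lemma om_insert:
  assumes fS: "finite S" and aS: "a \<notin> S"
  shows "om (insert a S) \<beta> (Suc m) = om S \<beta> (Suc m) + \<beta> a * om S \<beta> m"
proof -
  let ?X = "{I. I \<subseteq> S \<and> card I = Suc m}" and ?Y = "{I. I \<subseteq> S \<and> card I = m}"
  have eq: "{I. I \<subseteq> insert a S \<and> card I = Suc m} = ?X \<union> insert a ` ?Y"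
  proof (intro equalityI subsetI)
    fix I assume "I \<in> {I. I \<subseteq> insert a S \<and> card I = Suc m}"
    hence I: "I \<subseteq> insert a S" "card I = Suc m" by auto
    show "I \<in> ?X \<union> insert a ` ?Y"
    proof (cases "a \<in> I")
      case True
      have "finite I" using I fS finite_subset by blast
      hence "card (I - {a}) = m" using I True by auto
      moreover have "I - {a} \<subseteq> S" using I by auto
      moreover have "I = insert a (I - {a})" using True by auto
      ultimately show ?thesis by blast
    next
      case False thus ?thesis using I by auto
    qed
  next
    fix I assume "I \<in> ?X \<union> insert a ` ?Y"
    then show "I \<in> {I. I \<subseteq> insert a S \<and> card I = Suc m}"
    proof
      assume "I \<in> ?X" thus ?thesis by auto
    next
      assume "I \<in> insert a ` ?Y"
      then obtain J where J: "J \<subseteq> S" "card J = m" "I = insert a J" by auto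
      have "finite J" using J fS finite_subset by blast
      moreover have "a \<notin> J" using J aS by auto
      ultimately show ?thesis using J by auto
    qed
  qed
  have fX: "finite ?X" and fY: "finite ?Y" using fS by (auto intro: finite_subset[of _ "Pow S"])
  have disj: "?X \<inter> insert a ` ?Y = {}" using aS by auto
  have inj: "inj_on (insert a) ?Y" using aS unfolding inj_on_def by (metis insert_ident mem_Collect_eq subsetD)
  have "om (insert a S) \<beta> (Suc m) = (\<Sum>I\<in>?X. prod \<beta> I) + (\<Sum>I\<in>insert a ` ?Y. prod \<beta> I)"
    unfolding om_def eq by (rule sum.union_disjoint) (use fX fY disj in auto)
  also have "(\<Sum>I\<in>insert a ` ?Y. prod \<beta> I) = (\<Sum>J\<in>?Y. prod \<beta> (insert a J))"
    by (rule sum.reindex[OF inj, unfolded comp_def])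
  also have "\<dots> = (\<Sum>J\<in>?Y. \<beta> a * prod \<beta> J)"
  proof (rule sum.cong[OF refl])
    fix J assume "J \<in> ?Y"
    hence "finite J" "a \<notin> J" using fS aS finite_subset by auto
    thus "prod \<beta> (insert a J) = \<beta> a * prod \<beta> J" by simp
  qed
  finally show ?thesis unfolding om_def by (simp add: sum_distrib_left)
qed

definition KI :: "complex \<Rightarrow> complex \<Rightarrow> complex \<Rightarrow> complex \<Rightarrow> complex \<Rightarrow> complex \<Rightarrow> (nat \<Rightarrow> complex) \<Rightarrow> nat \<Rightarrow> nat \<Rightarrow> complex" where
  "KI A B C D P Q u n m = A * (of_nat n - of_nat m + 1) * (if m = 0 then 0 else u (m - 1))
     + D * (of_nat m + 1) * u (m + 1) + ((B - P) * (of_nat n - of_nat m) + (C - Q) * of_nat m) * u m"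

lemma KI_om:
  assumes fS: "finite S"
    and quad: "\<forall>i\<in>S. D * \<beta> i ^ 2 = (P - Q - B + C) * \<beta> i + A"
  shows "KI A B C D P Q (om S \<beta>) (card S) m = (\<Sum>i\<in>S. D * \<beta> i + B - P) * om S \<beta> m"
  using fS quad
proof (induction S arbitrary: m rule: finite_induct)
  case empty
  show ?case unfolding KI_def by (cases m) (auto simp: om_empty)
next
  case (insert a S)
  have IH: "\<And>m. KI A B C D P Q (om S \<beta>) (card S) m = (\<Sum>i\<in>S. D * \<beta> i + B - P) * om S \<beta> m"
    using insert by auto
  have qa: "D * \<beta> a ^ 2 = (P - Q - B + C) * \<beta> a + A" using insert by auto
  define \<sigma> where "\<sigma> = (\<Sum>i\<in>S. D * \<beta> i + B - P)"
  define u where "u = om S \<beta>"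
  have v0: "om (insert a S) \<beta> 0 = 1" "u 0 = 1" using insert om_zero unfolding u_def by auto
  have vS: "\<And>m. om (insert a S) \<beta> (Suc m) = u (Suc m) + \<beta> a * u m"
    using om_insert insert unfolding u_def by auto
  have cs: "card (insert a S) = Suc (card S)" using insert by auto
  have sig: "(\<Sum>i\<in>insert a S. D * \<beta> i + B - P) = \<sigma> + (D * \<beta> a + B - P)"
    using insert unfolding \<sigma>_def by simp
  have vk: "\<And>k. om (insert a S) \<beta> k = u k + \<beta> a * (if k = 0 then 0 else u (k - 1))"
    subgoal for k using v0 vS by (cases k) auto done
  show ?case
  proof (cases m)
    case 0
    have h: "KI A B C D P Q u (card S) 0 = \<sigma> * u 0" using IH unfolding \<sigma>_def u_def by simp
    show ?thesis unfolding cs sig 0 using h v0 vS[of 0]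
      unfolding KI_def by (simp add: algebra_simps)
  next
    case (Suc k)
    have h1: "KI A B C D P Q u (card S) (Suc k) = \<sigma> * u (Suc k)" using IH unfolding \<sigma>_def u_def by simp
    have h0: "KI A B C D P Q u (card S) k = \<sigma> * u k" using IH unfolding \<sigma>_def u_def by simp
    define n where "n = (of_nat (card S) :: complex)"
    define kk where "kk = (of_nat k :: complex)"
    define um where "um = (if k = 0 then 0 else u (k - 1))"
    have h1': "A*(n - (kk+1) + 1)*u k + D*(kk+2)*u (Suc (Suc k)) + ((B-P)*(n-(kk+1)) + (C-Q)*(kk+1))*u (Suc k) = \<sigma>*u (Suc k)"
      using h1 unfolding KI_def n_def kk_def by (simp add: add.commute)
    have h0': "A*(n - kk + 1)*um + D*(kk+1)*u (Suc k) + ((B-P)*(n-kk) + (C-Q)*kk)*u k = \<sigma>*u k"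
      using h0 unfolding KI_def n_def kk_def um_def by (simp add: add.commute)
    note st = alg_step[OF h1' h0' qa]
    have e1: "om (insert a S) \<beta> k = u k + \<beta> a * um" using vk[of k] unfolding um_def .
    have e2: "om (insert a S) \<beta> (Suc k) = u (Suc k) + \<beta> a * u k" using vS .
    have e3: "om (insert a S) \<beta> (Suc (Suc k)) = u (Suc (Suc k)) + \<beta> a * u (Suc k)" using vS .
    have "KI A B C D P Q (om (insert a S) \<beta>) (Suc (card S)) (Suc k) =
       A*((n+1) - (kk+1) + 1)*(u k + \<beta> a*um) + D*(kk+2)*(u (Suc (Suc k)) + \<beta> a*u (Suc k)) + ((B-P)*((n+1)-(kk+1)) + (C-Q)*(kk+1))*(u (Suc k)+\<beta> a*u k)"
      unfolding KI_def e1[symmetric] e2[symmetric] e3[symmetric] n_def kk_def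
      by (simp add: add.commute numeral_2_eq_2 add.assoc)
    then show ?thesis unfolding cs sig Suc using st e2 by simp
  qed
qed


lemma quad_bound:
  fixes f g :: "nat \<Rightarrow> real" and M :: "nat \<Rightarrow> nat \<Rightarrow> real"
  shows "2 * (\<Sum>m\<le>c. f m * (\<Sum>m'\<le>c. M m m' * g m'))
     \<le> (\<Sum>m\<le>c. \<Sum>m'\<le>c. \<bar>M m m'\<bar>) * ((\<Sum>m\<le>c. (f m)\<^sup>2) + (\<Sum>m\<le>c. (g m)\<^sup>2))"
proof -
  let ?Sf = "\<Sum>m\<le>c. (f m)\<^sup>2" and ?Sg = "\<Sum>m\<le>c. (g m)\<^sup>2"
  have fle: "(f m)\<^sup>2 \<le> ?Sf" if "m \<le> c" for m
    by (rule member_le_sum[where f="\<lambda>m. (f m)\<^sup>2"]) (use that in auto)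
  have gle: "(g m)\<^sup>2 \<le> ?Sg" if "m \<le> c" for m
    by (rule member_le_sum[where f="\<lambda>m. (g m)\<^sup>2"]) (use that in auto)
  have "2 * (\<Sum>m\<le>c. f m * (\<Sum>m'\<le>c. M m m' * g m')) = (\<Sum>m\<le>c. \<Sum>m'\<le>c. 2 * f m * M m m' * g m')"
    by (simp add: sum_distrib_left mult.assoc mult.left_commute)
  also have "\<dots> \<le> (\<Sum>m\<le>c. \<Sum>m'\<le>c. \<bar>M m m'\<bar> * (?Sf + ?Sg))"
  proof (intro sum_mono)
    fix m m' assume "m \<in> {..c}" "m' \<in> {..c}"
    hence h: "(f m)\<^sup>2 \<le> ?Sf" "(g m')\<^sup>2 \<le> ?Sg" using fle gle by auto
    have "2 * f m * M m m' * g m' \<le> \<bar>2 * f m * M m m' * g m'\<bar>" by (rule abs_ge_self)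
    also have "\<dots> = \<bar>M m m'\<bar> * (2 * \<bar>f m\<bar> * \<bar>g m'\<bar>)"
      by (simp add: abs_mult)
    also have "\<dots> \<le> \<bar>M m m'\<bar> * ((f m)\<^sup>2 + (g m')\<^sup>2)"
    proof (rule mult_left_mono)
      show "2 * \<bar>f m\<bar> * \<bar>g m'\<bar> \<le> (f m)\<^sup>2 + (g m')\<^sup>2"
        using sum_squares_bound[of "\<bar>f m\<bar>" "\<bar>g m'\<bar>"] by simp
    qed simp
    also have "\<dots> \<le> \<bar>M m m'\<bar> * (?Sf + ?Sg)"
      using h by (intro mult_left_mono) auto
    finally show "2 * f m * M m m' * g m' \<le> \<bar>M m m'\<bar> * (?Sf + ?Sg)" .
  qed
  also have "\<dots> = (\<Sum>m\<le>c. \<Sum>m'\<le>c. \<bar>M m m'\<bar>) * (?Sf + ?Sg)"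
    by (simp add: sum_distrib_right)
  finally show ?thesis .
qed

lemma tri_bound:
  fixes r G :: "nat \<Rightarrow> real"
  assumes r0: "\<And>i. 0 \<le> r i" and G0: "\<And>j. 0 \<le> G j" and r00: "r 0 = 0"
  shows "(\<Sum>n\<le>N. \<Sum>k\<in>{1..n}. r k * G (n - k)) \<le> (\<Sum>i\<le>N. r i) * (\<Sum>j\<le>N. G j)"
proof -
  have "(\<Sum>n\<le>N. \<Sum>k\<in>{1..n}. r k * G (n - k)) = (\<Sum>n\<le>N. \<Sum>k\<le>n. r k * G (n - k))"
  proof (rule sum.cong[OF refl])
    fix n :: nat
    have "{..n} = insert 0 {1..n}" by (auto simp: not_less_eq_eq)
    thus "(\<Sum>k\<in>{1..n}. r k * G (n - k)) = (\<Sum>k\<le>n. r k * G (n - k))" using r00 by simp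
  qed
  also have "\<dots> = (\<Sum>(i,j)\<in>{(i,j). i+j \<le> N}. r i * G j)"
    by (rule sum.triangle_reindex_eq[symmetric])
  also have "\<dots> \<le> (\<Sum>(i,j)\<in>{..N} \<times> {..N}. r i * G j)"
    by (rule sum_mono2) (auto intro: mult_nonneg_nonneg r0 G0)
  also have "\<dots> = (\<Sum>i\<le>N. r i) * (\<Sum>j\<le>N. G j)"
    by (simp add: sum_product sum.cartesian_product)
  finally show ?thesis .
qed

lemma energy_bound:
  fixes La :: "int \<Rightarrow> nat \<Rightarrow> nat \<Rightarrow> real" and Fp :: "nat \<Rightarrow> nat \<Rightarrow> real \<Rightarrow> real" and c K :: nat
  assumes init: "\<forall>n m. m \<le> c \<longrightarrow> Fp n m 0 = 1"
  and ode: "\<forall>n m t. m \<le> c \<longrightarrow> 0 \<le> t \<longrightarrow> ((Fp n m) has_real_derivative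
           ((\<Sum>i\<in>{0..K}. \<Sum>m'\<le>c. La (int i) m m' * Fp n m' t)
            + (\<Sum>k\<in>{1..n}. \<Sum>m'\<le>c. La (- int k) m m' * Fp (n - k) m' t))) (at t within {0..})"
  and summ: "summable (\<lambda>k. \<Sum>m\<le>c. \<Sum>m'\<le>c. \<bar>La (- int (Suc k)) m m'\<bar>)"
  shows "\<exists>L\<ge>0. \<forall>n m t. m \<le> c \<longrightarrow> 0 \<le> t \<longrightarrow> \<bar>Fp n m t\<bar> \<le> (real n + 1) * (real c + 1) * exp (L * t)"
proof -
  define rr where "rr k = (\<Sum>m\<le>c. \<Sum>m'\<le>c. \<bar>La (- int k) m m'\<bar>)" for k :: nat
  define r' where "r' k = (if k = 0 then 0 else rr k)" for k :: nat
  define aa where "aa = (\<Sum>i\<in>{0..K}. \<Sum>m\<le>c. \<Sum>m'\<le>c. \<bar>La (int i) m m'\<bar>)"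
  define \<rho> where "\<rho> = (\<Sum>k. rr (Suc k))"
  define L where "L = 2 * aa + 2 * \<rho>"
  define RHS where "RHS n m t = (\<Sum>i\<in>{0..K}. \<Sum>m'\<le>c. La (int i) m m' * Fp n m' t)
            + (\<Sum>k\<in>{1..n}. \<Sum>m'\<le>c. La (- int k) m m' * Fp (n - k) m' t)" for n m t
  have summ': "summable (\<lambda>k. rr (Suc k))" using summ unfolding rr_def .
  have rr0: "0 \<le> rr k" for k unfolding rr_def by (intro sum_nonneg) auto
  have r'0: "0 \<le> r' k" for k unfolding r'_def using rr0 by auto
  have aa0: "0 \<le> aa" unfolding aa_def by (intro sum_nonneg) auto
  have \<rho>0: "0 \<le> \<rho>" unfolding \<rho>_def by (intro suminf_nonneg summ' rr0)
  have L0: "0 \<le> L" unfolding L_def using aa0 \<rho>0 by simp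
  have r'sum: "(\<Sum>i\<le>N. r' i) \<le> \<rho>" for N
  proof -
    have "(\<Sum>i\<le>N. r' i) = (\<Sum>i<Suc N. r' i)" by (simp add: lessThan_Suc_atMost)
    also have "\<dots> = r' 0 + (\<Sum>i<N. r' (Suc i))" by (rule sum.lessThan_Suc_shift)
    also have "\<dots> = (\<Sum>i<N. rr (Suc i))" unfolding r'_def by simp
    also have "\<dots> \<le> \<rho>" unfolding \<rho>_def by (rule sum_le_suminf[OF summ']) (auto intro: rr0)
    finally show ?thesis .
  qed
  have rrsum: "(\<Sum>k\<in>{1..n}. rr k) \<le> \<rho>" for n
  proof -
    have "{..n} = insert 0 {1..n}" by (auto simp: not_less_eq_eq)
    moreover have "{Suc 0..n} \<inter> - {0} = {Suc 0..n}" by auto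
    ultimately have "(\<Sum>k\<in>{1..n}. rr k) = (\<Sum>i\<le>n. r' i)" unfolding r'_def
      by (simp add: sum.If_cases)
    thus ?thesis using r'sum by simp
  qed
  have main: "\<forall>t\<ge>0. (\<Sum>n\<le>N. \<Sum>m\<le>c. (Fp n m t)\<^sup>2) \<le> (real N + 1) * (real c + 1) * exp (L * t)" for N
  proof -
    define G where "G n t = (\<Sum>m\<le>c. (Fp n m t)\<^sup>2)" for n t
    define E where "E t = (\<Sum>n\<le>N. G n t)" for t
    define E' where "E' t = (\<Sum>n\<le>N. \<Sum>m\<le>c. 2 * Fp n m t * RHS n m t)" for t
    have G0: "0 \<le> G n t" for n t unfolding G_def by (intro sum_nonneg) auto
    have dE: "(E has_real_derivative E' t) (at t within {0..})" if "0 \<le> t" for t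
      unfolding E_def E'_def G_def
    proof (intro DERIV_sum)
      fix n m assume "m \<in> {..c}"
      hence "((\<lambda>t. (Fp n m t) ^ 2) has_real_derivative of_nat 2 * (RHS n m t * Fp n m t ^ (2 - Suc 0))) (at t within {0..})"
        using ode that unfolding RHS_def by (intro DERIV_power) auto
      thus "((\<lambda>t. (Fp n m t)\<^sup>2) has_real_derivative 2 * Fp n m t * RHS n m t) (at t within {0..})"
        by (simp add: mult_ac)
    qed
    have Eb: "E' t \<le> L * E t" for t
    proof -
      have bn: "(\<Sum>m\<le>c. 2 * Fp n m t * RHS n m t) \<le> (2 * aa + \<rho>) * G n t + (\<Sum>k\<in>{1..n}. r' k * G (n - k) t)" for n
      proof -
        have "(\<Sum>m\<le>c. 2 * Fp n m t * RHS n m t)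
          = (\<Sum>i\<in>{0..K}. 2 * (\<Sum>m\<le>c. Fp n m t * (\<Sum>m'\<le>c. La (int i) m m' * Fp n m' t)))
          + (\<Sum>k\<in>{1..n}. 2 * (\<Sum>m\<le>c. Fp n m t * (\<Sum>m'\<le>c. La (- int k) m m' * Fp (n - k) m' t)))"
          unfolding RHS_def by (simp add: sum_distrib_left sum_distrib_right sum.distrib algebra_simps sum.swap[of _ "{0..K}"] sum.swap[of _ "{..c}" "{Suc 0..n}"])
        also have "\<dots> \<le> (\<Sum>i\<in>{0..K}. (\<Sum>m\<le>c. \<Sum>m'\<le>c. \<bar>La (int i) m m'\<bar>) * (G n t + G n t))
             + (\<Sum>k\<in>{1..n}. rr k * (G n t + G (n - k) t))"
          unfolding G_def rr_def by (intro add_mono sum_mono quad_bound)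
        also have "\<dots> = 2 * aa * G n t + (\<Sum>k\<in>{1..n}. rr k) * G n t + (\<Sum>k\<in>{1..n}. r' k * G (n - k) t)"
          unfolding aa_def r'_def by (simp add: sum_distrib_right sum.distrib algebra_simps) (simp add: sum_distrib_left sum_distrib_right mult_ac)
        also have "\<dots> \<le> 2 * aa * G n t + \<rho> * G n t + (\<Sum>k\<in>{1..n}. r' k * G (n - k) t)"
          using rrsum[of n] G0[of n t] aa0 by (intro add_mono mult_right_mono) auto
        finally show ?thesis by (simp add: algebra_simps)
      qed
      have "E' t \<le> (\<Sum>n\<le>N. (2 * aa + \<rho>) * G n t + (\<Sum>k\<in>{1..n}. r' k * G (n - k) t))"
        unfolding E'_def by (intro sum_mono bn)
      also have "\<dots> = (2 * aa + \<rho>) * E t + (\<Sum>n\<le>N. \<Sum>k\<in>{1..n}. r' k * G (n - k) t)"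
        unfolding E_def by (simp add: sum.distrib sum_distrib_left)
      also have "\<dots> \<le> (2 * aa + \<rho>) * E t + (\<Sum>i\<le>N. r' i) * E t"
        unfolding E_def by (intro add_mono order_refl tri_bound r'0 G0) (simp add: r'_def)
      also have "\<dots> \<le> (2 * aa + \<rho>) * E t + \<rho> * E t"
        using r'sum[of N] by (intro add_mono order_refl mult_right_mono) (auto simp: E_def intro!: sum_nonneg G0)
      finally show ?thesis unfolding L_def by (simp add: algebra_simps)
    qed
    show ?thesis
    proof (intro allI impI)
      fix t :: real assume t0: "0 \<le> t"
      define \<phi> where "\<phi> s = E s * exp (- L * s)" for s
      have "\<phi> t \<le> \<phi> 0"
      proof (rule DERIV_nonpos_imp_decreasing_open[OF t0])
        fix x assume x: "0 < x" "x < t"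
        have "(E has_real_derivative E' x) (at x)"
          using dE[of x] x at_within_interior[of x "{0..}"] by auto
        hence "(\<phi> has_real_derivative (E' x * exp (- L * x) + E x * (exp (- L * x) * (- L)))) (at x)"
          unfolding \<phi>_def by (auto intro!: derivative_eq_intros)
        moreover have "E' x * exp (- L * x) + E x * (exp (- L * x) * (- L)) \<le> 0"
        proof -
          have "E' x * exp (- L * x) + E x * (exp (- L * x) * (- L)) = (E' x - L * E x) * exp (- L * x)"
            by (simp add: algebra_simps)
          also have "\<dots> \<le> 0" using Eb[of x] by (intro mult_nonpos_nonneg) auto
          finally show ?thesis .
        qed
        ultimately show "\<exists>y. (\<phi> has_real_derivative y) (at x) \<and> y \<le> 0" by blast
      next
        show "continuous_on {0..t} \<phi>"
          unfolding \<phi>_def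
        proof (intro continuous_intros)
          show "continuous_on {0..t} E"
            unfolding continuous_on_eq_continuous_within
          proof
            fix x assume "x \<in> {0..t}"
            hence "continuous (at x within {0..}) E" using dE[of x] DERIV_continuous by auto
            thus "continuous (at x within {0..t}) E" by (rule continuous_within_subset) auto
          qed
        qed
      qed
      moreover have "E 0 = (real N + 1) * (real c + 1)"
        unfolding E_def G_def using init by (simp add: add.commute)
      ultimately have "E t * exp (- L * t) \<le> (real N + 1) * (real c + 1)"
        unfolding \<phi>_def by simp
      hence "E t \<le> (real N + 1) * (real c + 1) * exp (L * t)"
        by (simp add: exp_minus field_simps)
      thus "(\<Sum>n\<le>N. \<Sum>m\<le>c. (Fp n m t)\<^sup>2) \<le> (real N + 1) * (real c + 1) * exp (L * t)"
        unfolding E_def G_def .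
    qed
  qed
  show ?thesis
  proof (intro exI[of _ L] conjI L0 allI impI)
    fix n m :: nat and t :: real assume m: "m \<le> c" and t: "0 \<le> t"
    define X where "X = (real n + 1) * (real c + 1) * exp (L * t)"
    have X1: "1 \<le> X"
    proof -
      have "1 * 1 * 1 \<le> X" unfolding X_def using t L0
        by (intro mult_mono) auto
      thus ?thesis by simp
    qed
    have "(Fp n m t)\<^sup>2 \<le> (\<Sum>m\<le>c. (Fp n m t)\<^sup>2)"
      by (rule member_le_sum[where f="\<lambda>m. (Fp n m t)\<^sup>2"]) (use m in auto)
    also have "\<dots> \<le> (\<Sum>n'\<le>n. \<Sum>m\<le>c. (Fp n' m t)\<^sup>2)"
      by (rule member_le_sum[where f="\<lambda>n'. \<Sum>m\<le>c. (Fp n' m t)\<^sup>2"]) (auto intro: sum_nonneg)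
    also have "\<dots> \<le> X" using main[of n] t unfolding X_def by auto
    also have "\<dots> \<le> X\<^sup>2" using X1 by (simp add: power2_eq_square)
    finally have "\<bar>Fp n m t\<bar>\<^sup>2 \<le> X\<^sup>2" by simp
    hence "\<bar>Fp n m t\<bar> \<le> X" by (rule power2_le_imp_le) (use X1 in auto)
    thus "\<bar>Fp n m t\<bar> \<le> (real n + 1) * (real c + 1) * exp (L * t)" unfolding X_def .
  qed
qed



lemma tri_swap:
  fixes g :: "nat \<Rightarrow> nat \<Rightarrow> 'a::comm_monoid_add"
  shows "(\<Sum>n<N. \<Sum>k\<le>n. g k (n - k)) = (\<Sum>p<N. \<Sum>k<N - p. g k p)"
proof (induction N)
  case 0 show ?case by simp
next
  case (Suc N)
  have r: "(\<Sum>k\<le>N. g k (N - k)) = (\<Sum>p\<le>N. g (N - p) p)"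
    by (rule sum.reindex_bij_witness[where i="\<lambda>p. N - p" and j="\<lambda>k. N - k"]) auto
  have "(\<Sum>p<Suc N. \<Sum>k<Suc N - p. g k p) = (\<Sum>p<N. \<Sum>k<Suc N - p. g k p) + g 0 N"
    by simp
  also have "(\<Sum>p<N. \<Sum>k<Suc N - p. g k p) = (\<Sum>p<N. (\<Sum>k<N - p. g k p) + g (N - p) p)"
  proof (rule sum.cong[OF refl])
    fix p assume "p \<in> {..<N}"
    hence "Suc N - p = Suc (N - p)" by auto
    thus "(\<Sum>k<Suc N - p. g k p) = (\<Sum>k<N - p. g k p) + g (N - p) p" by simp
  qed
  also have "\<dots> = (\<Sum>p<N. \<Sum>k<N - p. g k p) + (\<Sum>p<N. g (N - p) p)" by (simp add: sum.distrib)
  finally have "(\<Sum>p<Suc N. \<Sum>k<Suc N - p. g k p) = (\<Sum>p<N. \<Sum>k<N - p. g k p) + ((\<Sum>p<N. g (N - p) p) + g 0 N)"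
    by (simp add: add.assoc)
  moreover have "(\<Sum>p<N. g (N - p) p) + g 0 N = (\<Sum>p\<le>N. g (N - p) p)"
    by (simp add: lessThan_Suc_atMost[symmetric])
  ultimately show ?case using Suc r by simp
qed

lemma diag_col:
  fixes La :: "int \<Rightarrow> nat \<Rightarrow> nat \<Rightarrow> real" and w :: "nat \<Rightarrow> complex"
  assumes diag: "\<forall>m\<le>c. \<forall>m'\<le>c. La i m m' = (if m = m' then l else 0)" and m': "m' \<le> c"
  shows "(\<Sum>m\<le>c. w m * of_real (La i m m')) = of_real l * w m'"
proof -
  have "(\<Sum>m\<le>c. w m * of_real (La i m m')) = (\<Sum>m\<le>c. if m = m' then of_real l * w m else 0)"
    by (rule sum.cong[OF refl]) (use diag m' in auto)
  also have "\<dots> = of_real l * w m'" using m' by (simp add: sum.delta')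
  finally show ?thesis .
qed

lemma swap3:
  fixes w :: "'m \<Rightarrow> 'a::comm_ring_1" and L :: "'i \<Rightarrow> 'm \<Rightarrow> 'n \<Rightarrow> 'a"
  shows "(\<Sum>m\<in>A. w m * (\<Sum>i\<in>I. \<Sum>m'\<in>B. L i m m' * g i m')) = (\<Sum>i\<in>I. \<Sum>m'\<in>B. (\<Sum>m\<in>A. w m * L i m m') * g i m')"
proof -
  have "(\<Sum>m\<in>A. w m * (\<Sum>i\<in>I. \<Sum>m'\<in>B. L i m m' * g i m')) = (\<Sum>m\<in>A. \<Sum>i\<in>I. \<Sum>m'\<in>B. w m * L i m m' * g i m')"
    by (simp add: sum_distrib_left mult.assoc)
  also have "\<dots> = (\<Sum>i\<in>I. \<Sum>m\<in>A. \<Sum>m'\<in>B. w m * L i m m' * g i m')" by (rule sum.swap)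
  also have "\<dots> = (\<Sum>i\<in>I. \<Sum>m'\<in>B. \<Sum>m\<in>A. w m * L i m m' * g i m')" by (rule sum.cong[OF refl], rule sum.swap)
  also have "\<dots> = (\<Sum>i\<in>I. \<Sum>m'\<in>B. (\<Sum>m\<in>A. w m * L i m m') * g i m')" by (simp add: sum_distrib_right)
  finally show ?thesis .
qed

lemma swap2:
  fixes Z :: "'n \<Rightarrow> 'k \<Rightarrow> 'a::comm_ring_1"
  shows "(\<Sum>k\<in>A. x k * (\<Sum>m'\<in>B. Z m' k * g m')) = (\<Sum>m'\<in>B. (\<Sum>k\<in>A. x k * Z m' k) * g m')"
proof -
  have "(\<Sum>k\<in>A. x k * (\<Sum>m'\<in>B. Z m' k * g m')) = (\<Sum>k\<in>A. \<Sum>m'\<in>B. x k * Z m' k * g m')"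
    by (simp add: sum_distrib_left mult.assoc)
  also have "\<dots> = (\<Sum>m'\<in>B. \<Sum>k\<in>A. x k * Z m' k * g m')" by (rule sum.swap)
  also have "\<dots> = (\<Sum>m'\<in>B. (\<Sum>k\<in>A. x k * Z m' k) * g m')" by (simp add: sum_distrib_right)
  finally show ?thesis .
qed

lemma Hprime_alg:
  fixes La :: "int \<Rightarrow> nat \<Rightarrow> nat \<Rightarrow> real" and f :: "nat \<Rightarrow> nat \<Rightarrow> complex" and w :: "nat \<Rightarrow> complex"
    and b \<nu> :: complex and lam :: "nat \<Rightarrow> real" and tail :: "nat \<Rightarrow> nat \<Rightarrow> complex"
  assumes diag: "\<forall>i\<in>{1..K}. \<forall>m\<le>c. \<forall>m'\<le>c. La (int i) m m' = (if m = m' then lam i else 0)"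
  and kp: "\<forall>M m'. m' \<le> c \<longrightarrow> (\<Sum>k<M. b^k * (\<Sum>m\<le>c. w m * of_real (La (- int k) m m'))) = - \<nu> * w m' - tail M m'"
  and \<nu>_def: "\<nu> = (\<Sum>i\<in>{1..K}. of_real (lam i) / b^i)"
  shows "(\<Sum>n<N. \<Sum>m\<le>c. b^n * w m * ((\<Sum>i\<in>{0..K}. \<Sum>m'\<le>c. of_real (La (int i) m m') * f n m')
            + (\<Sum>k\<in>{1..n}. \<Sum>m'\<le>c. of_real (La (- int k) m m') * f (n - k) m')))
       = (\<Sum>i\<in>{1..K}. (1 - 1 / b^i) * of_real (lam i)) * (\<Sum>n<N. \<Sum>m\<le>c. b^n * w m * f n m)
         - (\<Sum>p<N. b^p * (\<Sum>m'\<le>c. tail (N - p) m' * f p m'))"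
proof -
  define Z where "Z m' k = (\<Sum>m\<le>c. w m * of_real (La (- int k) m m'))" for m' k
  define \<Lambda> where "\<Lambda> = (\<Sum>i\<in>{1..K}. complex_of_real (lam i))"
  define H where "H = (\<Sum>n<N. \<Sum>m\<le>c. b^n * w m * f n m)"
  have s1: "(\<Sum>m\<le>c. w m * ((\<Sum>i\<in>{0..K}. \<Sum>m'\<le>c. of_real (La (int i) m m') * f n m')
            + (\<Sum>k\<in>{1..n}. \<Sum>m'\<le>c. of_real (La (- int k) m m') * f (n - k) m')))
        = (\<Sum>k\<le>n. \<Sum>m'\<le>c. Z m' k * f (n - k) m') + \<Lambda> * (\<Sum>m'\<le>c. w m' * f n m')" for n
  proof -
    have A: "(\<Sum>m\<le>c. w m * (\<Sum>i\<in>{0..K}. \<Sum>m'\<le>c. of_real (La (int i) m m') * f n m'))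
        = (\<Sum>i\<in>{0..K}. \<Sum>m'\<le>c. (\<Sum>m\<le>c. w m * of_real (La (int i) m m')) * f n m')"
      by (rule swap3)
    also have "\<dots> = (\<Sum>m'\<le>c. Z m' 0 * f n m') + (\<Sum>i\<in>{1..K}. \<Sum>m'\<le>c. (\<Sum>m\<le>c. w m * of_real (La (int i) m m')) * f n m')"
    proof -
      have "{0..K} = insert 0 {1..K}" by (auto simp: not_less_eq_eq)
      thus ?thesis unfolding Z_def by simp
    qed
    also have "(\<Sum>i\<in>{1..K}. \<Sum>m'\<le>c. (\<Sum>m\<le>c. w m * of_real (La (int i) m m')) * f n m')
        = (\<Sum>i\<in>{1..K}. \<Sum>m'\<le>c. of_real (lam i) * w m' * f n m')"
      by (intro sum.cong refl, subst diag_col[where l="lam _"]) (use diag in auto)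
    also have "\<dots> = \<Lambda> * (\<Sum>m'\<le>c. w m' * f n m')"
      unfolding \<Lambda>_def by (simp add: sum_distrib_left sum_distrib_right mult_ac sum.swap[of _ "{Suc 0..K}" "{..c}"])
    finally have A': "(\<Sum>m\<le>c. w m * (\<Sum>i\<in>{0..K}. \<Sum>m'\<le>c. of_real (La (int i) m m') * f n m'))
       = (\<Sum>m'\<le>c. Z m' 0 * f n m') + \<Lambda> * (\<Sum>m'\<le>c. w m' * f n m')" .
    have B: "(\<Sum>m\<le>c. w m * (\<Sum>k\<in>{1..n}. \<Sum>m'\<le>c. of_real (La (- int k) m m') * f (n - k) m'))
        = (\<Sum>k\<in>{1..n}. \<Sum>m'\<le>c. Z m' k * f (n - k) m')"
      unfolding Z_def by (rule swap3)
    have "{..n} = insert 0 {1..n}" by (auto simp: not_less_eq_eq)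
    hence C: "(\<Sum>k\<le>n. \<Sum>m'\<le>c. Z m' k * f (n - k) m') = (\<Sum>m'\<le>c. Z m' 0 * f n m') + (\<Sum>k\<in>{1..n}. \<Sum>m'\<le>c. Z m' k * f (n - k) m')"
      by simp
    show ?thesis unfolding distrib_left sum.distrib A' B C by (simp add: algebra_simps)
  qed
  have "(\<Sum>n<N. \<Sum>m\<le>c. b^n * w m * ((\<Sum>i\<in>{0..K}. \<Sum>m'\<le>c. of_real (La (int i) m m') * f n m')
            + (\<Sum>k\<in>{1..n}. \<Sum>m'\<le>c. of_real (La (- int k) m m') * f (n - k) m')))
      = (\<Sum>n<N. b^n * ((\<Sum>k\<le>n. \<Sum>m'\<le>c. Z m' k * f (n - k) m') + \<Lambda> * (\<Sum>m'\<le>c. w m' * f n m')))"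
  proof (rule sum.cong[OF refl])
    fix n assume "n \<in> {..<N}"
    have "(\<Sum>m\<le>c. b^n * w m * ((\<Sum>i\<in>{0..K}. \<Sum>m'\<le>c. of_real (La (int i) m m') * f n m')
            + (\<Sum>k\<in>{1..n}. \<Sum>m'\<le>c. of_real (La (- int k) m m') * f (n - k) m')))
      = b^n * (\<Sum>m\<le>c. w m * ((\<Sum>i\<in>{0..K}. \<Sum>m'\<le>c. of_real (La (int i) m m') * f n m')
            + (\<Sum>k\<in>{1..n}. \<Sum>m'\<le>c. of_real (La (- int k) m m') * f (n - k) m')))"
      by (simp only: sum_distrib_left mult.assoc)
    thus "(\<Sum>m\<le>c. b^n * w m * ((\<Sum>i\<in>{0..K}. \<Sum>m'\<le>c. of_real (La (int i) m m') * f n m')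
            + (\<Sum>k\<in>{1..n}. \<Sum>m'\<le>c. of_real (La (- int k) m m') * f (n - k) m')))
      = b^n * ((\<Sum>k\<le>n. \<Sum>m'\<le>c. Z m' k * f (n - k) m') + \<Lambda> * (\<Sum>m'\<le>c. w m' * f n m'))"
      by (simp only: s1)
  qed
  also have "\<dots> = (\<Sum>n<N. \<Sum>k\<le>n. (\<lambda>k p. b^k * b^p * (\<Sum>m'\<le>c. Z m' k * f p m')) k (n - k)) + \<Lambda> * H"
  proof -
    have "b^n * (\<Sum>k\<le>n. \<Sum>m'\<le>c. Z m' k * f (n - k) m') = (\<Sum>k\<le>n. b^k * b^(n-k) * (\<Sum>m'\<le>c. Z m' k * f (n - k) m'))" for n
    proof -
      have "b^n = b^k * b^(n-k)" if "k \<le> n" for k using that by (simp add: power_add[symmetric])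
      thus ?thesis by (simp add: sum_distrib_left)
    qed
    thus ?thesis unfolding H_def by (simp add: distrib_left sum.distrib sum_distrib_left mult_ac)
  qed
  also have "(\<Sum>n<N. \<Sum>k\<le>n. (\<lambda>k p. b^k * b^p * (\<Sum>m'\<le>c. Z m' k * f p m')) k (n - k))
       = (\<Sum>p<N. \<Sum>k<N - p. b^k * b^p * (\<Sum>m'\<le>c. Z m' k * f p m'))"
    by (rule tri_swap)
  also have "\<dots> = (\<Sum>p<N. b^p * (\<Sum>m'\<le>c. (\<Sum>k<N - p. b^k * Z m' k) * f p m'))"
  proof (rule sum.cong[OF refl])
    fix p assume "p \<in> {..<N}"
    have "(\<Sum>k<N - p. b^k * b^p * (\<Sum>m'\<le>c. Z m' k * f p m')) = b^p * (\<Sum>k<N - p. b^k * (\<Sum>m'\<le>c. Z m' k * f p m'))"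
      by (simp add: sum_distrib_left mult_ac)
    also have "\<dots> = b^p * (\<Sum>m'\<le>c. (\<Sum>k<N - p. b^k * Z m' k) * f p m')" by (simp only: swap2)
    finally show "(\<Sum>k<N - p. b^k * b^p * (\<Sum>m'\<le>c. Z m' k * f p m')) = b^p * (\<Sum>m'\<le>c. (\<Sum>k<N - p. b^k * Z m' k) * f p m')" .
  qed
  also have "\<dots> = (\<Sum>p<N. b^p * (\<Sum>m'\<le>c. (- \<nu> * w m' - tail (N - p) m') * f p m'))"
    using kp unfolding Z_def by simp
  also have "\<dots> = - \<nu> * H - (\<Sum>p<N. b^p * (\<Sum>m'\<le>c. tail (N - p) m' * f p m'))"
    unfolding H_def by (simp add: algebra_simps sum_distrib_left sum.distrib sum_subtractf)
  finally have eq: "(\<Sum>n<N. \<Sum>m\<le>c. b^n * w m * ((\<Sum>i\<in>{0..K}. \<Sum>m'\<le>c. of_real (La (int i) m m') * f n m')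
            + (\<Sum>k\<in>{1..n}. \<Sum>m'\<le>c. of_real (La (- int k) m m') * f (n - k) m')))
     = - \<nu> * H - (\<Sum>p<N. b^p * (\<Sum>m'\<le>c. tail (N - p) m' * f p m')) + \<Lambda> * H" .
  have mu: "(\<Sum>i\<in>{1..K}. (1 - 1 / b^i) * of_real (lam i)) = \<Lambda> - \<nu>"
    unfolding \<Lambda>_def \<nu>_def by (simp add: algebra_simps sum_subtractf)
  show ?thesis unfolding eq mu H_def by (simp add: algebra_simps)
qed

lemma poly_geo_lim:
  fixes q :: real assumes q: "0 \<le> q" "q < 1"
  shows "(\<lambda>n. (real n + 1) * sqrt q ^ n) \<longlonglongrightarrow> 0"
proof -
  have s: "norm (sqrt q) < 1" using q by (simp add: real_sqrt_lt_1_iff)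
  have "(\<lambda>n. of_nat n * sqrt q ^ n + sqrt q ^ n) \<longlonglongrightarrow> 0 + 0"
    by (intro tendsto_add powser_times_n_limit_0 LIMSEQ_power_zero s)
  thus ?thesis by (simp add: algebra_simps)
qed

lemma poly_geo_summable:
  fixes q :: real assumes q: "0 \<le> q" "q < 1"
  shows "summable (\<lambda>n. (real n + 1) * q ^ n)"
proof -
  have "Bseq (\<lambda>n. (real n + 1) * sqrt q ^ n)" using poly_geo_lim[OF q] by (rule convergent_imp_Bseq[OF convergentI])
  then obtain M where M: "M > 0" "\<And>n. norm ((real n + 1) * sqrt q ^ n) \<le> M" by (auto simp: Bseq_def)
  have sq: "q ^ n = sqrt q ^ n * sqrt q ^ n" for n using q by (simp add: power_mult_distrib[symmetric])
  show ?thesis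
  proof (rule summable_comparison_test)
    show "\<exists>N. \<forall>n\<ge>N. norm ((real n + 1) * q ^ n) \<le> M * sqrt q ^ n"
    proof (intro exI allI impI)
      fix n
      have "norm ((real n + 1) * q ^ n) = norm ((real n + 1) * sqrt q ^ n) * sqrt q ^ n"
        using q by (simp add: sq abs_mult)
      also have "\<dots> \<le> M * sqrt q ^ n" using M(2)[of n] q by (intro mult_right_mono) auto
      finally show "norm ((real n + 1) * q ^ n) \<le> M * sqrt q ^ n" .
    qed
    show "summable (\<lambda>n. M * sqrt q ^ n)"
      using q by (intro summable_mult summable_geometric) (simp add: real_sqrt_lt_1_iff)
  qed
qed

lemma poly2_geo_lim:
  fixes q :: real assumes q: "0 \<le> q" "q < 1"
  shows "(\<lambda>n. (real n)^2 * q ^ n) \<longlonglongrightarrow> 0"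
proof -
  have s: "norm (sqrt q) < 1" using q by (simp add: real_sqrt_lt_1_iff)
  have "(\<lambda>n. (of_nat n * sqrt q ^ n) * (of_nat n * sqrt q ^ n)) \<longlonglongrightarrow> 0 * 0"
    by (intro tendsto_mult powser_times_n_limit_0 s)
  moreover have "(of_nat n * sqrt q ^ n) * (of_nat n * sqrt q ^ n) = (real n)^2 * q ^ n" for n
    using q by (simp add: power2_eq_square power_mult_distrib[symmetric] mult_ac)
  ultimately show ?thesis by simp
qed

lemma main_j:
  fixes La :: "int \<Rightarrow> nat \<Rightarrow> nat \<Rightarrow> real" and Fp :: "nat \<Rightarrow> nat \<Rightarrow> real \<Rightarrow> real" and c K :: nat
    and b :: complex and w :: "nat \<Rightarrow> complex" and lam :: "nat \<Rightarrow> real" and Lf t :: real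
  assumes init: "\<forall>n m. m \<le> c \<longrightarrow> Fp n m 0 = 1"
  and ode: "\<forall>n m t. m \<le> c \<longrightarrow> 0 \<le> t \<longrightarrow> ((Fp n m) has_real_derivative
           ((\<Sum>i\<in>{0..K}. \<Sum>m'\<le>c. La (int i) m m' * Fp n m' t)
            + (\<Sum>k\<in>{1..n}. \<Sum>m'\<le>c. La (- int k) m m' * Fp (n - k) m' t))) (at t within {0..})"
  and Fb: "\<forall>n m t. m \<le> c \<longrightarrow> 0 \<le> t \<longrightarrow> \<bar>Fp n m t\<bar> \<le> (real n + 1) * (real c + 1) * exp (Lf * t)"
  and Lf: "0 \<le> Lf"
  and b: "norm b < 1"
  and diag: "\<forall>i\<in>{1..K}. \<forall>m\<le>c. \<forall>m'\<le>c. La (int i) m m' = (if m = m' then lam i else 0)"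
  and kern: "\<forall>m'\<le>c. (\<lambda>k. b^k * (\<Sum>m\<le>c. w m * of_real (La (- int k) m m'))) sums (- (\<Sum>i\<in>{1..K}. of_real (lam i) / b^i) * w m')"
  and zsum: "\<forall>m'\<le>c. summable (\<lambda>k. norm (\<Sum>m\<le>c. w m * of_real (La (- int k) m m')))"
  and t: "0 \<le> t"
  shows "(\<Sum>n. \<Sum>m\<le>c. b^n * w m * of_real (Fp n m t))
    = (\<Sum>m\<le>c. w m) / (1 - b) * exp (of_real t * (\<Sum>i\<in>{1..K}. (1 - 1 / b^i) * of_real (lam i)))"
proof -
  define Z where "Z m' k = (\<Sum>m\<le>c. w m * of_real (La (- int k) m m'))" for m' k
  define \<nu> where "\<nu> = (\<Sum>i\<in>{1..K}. complex_of_real (lam i) / b^i)"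
  define \<mu> where "\<mu> = (\<Sum>i\<in>{1..K}. (1 - 1 / b^i) * complex_of_real (lam i))"
  define tail where "tail M m' = (\<Sum>k. b^(k+M) * Z m' (k+M))" for M m'
  define Zs where "Zs = (\<Sum>m'\<le>c. \<Sum>k. norm (Z m' k))"
  define H where "H N s = (\<Sum>n<N. \<Sum>m\<le>c. b^n * w m * of_real (Fp n m s))" for N s
  define r where "r N s = (\<Sum>p<N. b^p * (\<Sum>m'\<le>c. tail (N - p) m' * of_real (Fp p m' s)))" for N s
  have kern': "m' \<le> c \<Longrightarrow> (\<lambda>k. b^k * Z m' k) sums (- \<nu> * w m')" for m'
    using kern unfolding Z_def \<nu>_def by auto
  have kp: "\<forall>M m'. m' \<le> c \<longrightarrow> (\<Sum>k<M. b^k * Z m' k) = - \<nu> * w m' - tail M m'"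
  proof (intro allI impI)
    fix M m' assume m': "m' \<le> c"
    have "summable (\<lambda>k. b^k * Z m' k)" using kern'[OF m'] by (rule sums_summable)
    from suminf_split_initial_segment[OF this, of M]
    have "(\<Sum>k. b^k * Z m' k) = tail M m' + (\<Sum>k<M. b^k * Z m' k)" unfolding tail_def .
    moreover have "(\<Sum>k. b^k * Z m' k) = - \<nu> * w m'" using kern'[OF m'] by (rule sums_unique[symmetric])
    ultimately show "(\<Sum>k<M. b^k * Z m' k) = - \<nu> * w m' - tail M m'" by (simp add: algebra_simps)
  qed
  have Zs0: "0 \<le> Zs" unfolding Zs_def by (intro sum_nonneg suminf_nonneg) (use zsum Z_def in auto)
  have tailb: "norm (tail M m') \<le> norm b ^ M * Zs" if m': "m' \<le> c" for M m'
  proof -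
    have zs: "summable (\<lambda>k. norm (Z m' k))" using zsum m' unfolding Z_def by auto
    have zs': "summable (\<lambda>k. norm (Z m' (k + M)))" using zs by (rule summable_ignore_initial_segment)
    have le1: "norm (b^(k+M) * Z m' (k+M)) \<le> norm b ^ M * norm (Z m' (k + M))" for k
    proof -
      have "norm b ^ (k + M) \<le> norm b ^ M" using b by (simp add: power_add mult_left_le_one_le power_le_one)
      thus ?thesis by (simp add: norm_mult norm_power mult_right_mono)
    qed
    have sm: "summable (\<lambda>k. norm (b^(k+M) * Z m' (k+M)))"
      by (rule summable_comparison_test[OF _ summable_mult[OF zs', of "norm b ^ M"]]) (use le1 in auto)
    have "norm (tail M m') \<le> (\<Sum>k. norm (b^(k+M) * Z m' (k+M)))"
      unfolding tail_def by (rule summable_norm[OF sm])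
    also have "\<dots> \<le> (\<Sum>k. norm b ^ M * norm (Z m' (k + M)))"
      by (rule suminf_le[OF le1 sm summable_mult[OF zs']])
    also have "\<dots> = norm b ^ M * (\<Sum>k. norm (Z m' (k + M)))" by (rule suminf_mult[OF zs'])
    also have "(\<Sum>k. norm (Z m' (k + M))) \<le> (\<Sum>k. norm (Z m' k))"
    proof -
      have "(\<Sum>k. norm (Z m' k)) = (\<Sum>k. norm (Z m' (k + M))) + (\<Sum>i<M. norm (Z m' i))"
        by (rule suminf_split_initial_segment[OF zs])
      moreover have "0 \<le> (\<Sum>i<M. norm (Z m' i))" by (rule sum_nonneg) auto
      ultimately show ?thesis by simp
    qed
    hence "norm b ^ M * (\<Sum>k. norm (Z m' (k + M))) \<le> norm b ^ M * (\<Sum>k. norm (Z m' k))"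
      by (intro mult_left_mono) auto
    also have "(\<Sum>k. norm (Z m' k)) \<le> Zs" unfolding Zs_def
      by (rule member_le_sum[where f="\<lambda>m'. \<Sum>k. norm (Z m' k)"]) (use m' zsum Z_def in \<open>auto intro: suminf_nonneg\<close>)
    hence "norm b ^ M * (\<Sum>k. norm (Z m' k)) \<le> norm b ^ M * Zs" by (intro mult_left_mono) auto
    finally show ?thesis .
  qed
  have dH: "(H N has_vector_derivative (\<mu> * H N s - r N s)) (at s within {0..})" if s: "0 \<le> s" for N s
  proof -
    define RHS where "RHS n m = (\<Sum>i\<in>{0..K}. \<Sum>m'\<le>c. La (int i) m m' * Fp n m' s)
            + (\<Sum>k\<in>{1..n}. \<Sum>m'\<le>c. La (- int k) m m' * Fp (n - k) m' s)" for n m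
    have "(H N has_vector_derivative (\<Sum>n<N. \<Sum>m\<le>c. b^n * w m * of_real (RHS n m))) (at s within {0..})"
      unfolding H_def
      by (intro has_vector_derivative_sum has_vector_derivative_mult_right has_vector_derivative_of_real)
         (use ode s in \<open>auto simp: RHS_def\<close>)
    moreover have "(\<Sum>n<N. \<Sum>m\<le>c. b^n * w m * of_real (RHS n m)) = \<mu> * H N s - r N s"
    proof -
      have "(\<Sum>n<N. \<Sum>m\<le>c. b^n * w m * of_real (RHS n m))
        = (\<Sum>n<N. \<Sum>m\<le>c. b^n * w m * ((\<Sum>i\<in>{0..K}. \<Sum>m'\<le>c. of_real (La (int i) m m') * of_real (Fp n m' s))
            + (\<Sum>k\<in>{1..n}. \<Sum>m'\<le>c. of_real (La (- int k) m m') * of_real (Fp (n - k) m' s))))"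
        unfolding RHS_def by (simp only: of_real_add of_real_sum of_real_mult)
      also have "\<dots> = \<mu> * (\<Sum>n<N. \<Sum>m\<le>c. b^n * w m * of_real (Fp n m s))
         - (\<Sum>p<N. b^p * (\<Sum>m'\<le>c. tail (N - p) m' * of_real (Fp p m' s)))"
        unfolding \<mu>_def
        by (rule Hprime_alg[where f="\<lambda>n m. of_real (Fp n m s)"])
           (use diag kp in \<open>auto simp: \<nu>_def Z_def\<close>)
      finally show ?thesis unfolding H_def r_def .
    qed
    ultimately show ?thesis by simp
  qed
  define W where "W N s = exp (- (of_real s * \<mu>)) * H N s" for N s
  have dE: "((\<lambda>s. exp (- (of_real s * \<mu>))) has_vector_derivative (exp (- (of_real s * \<mu>)) * (- \<mu>))) (at s within S)" for s S
  proof -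
    have "((\<lambda>z. exp (- (z * \<mu>))) has_field_derivative (exp (- (of_real s * \<mu>)) * (- \<mu>))) (at (of_real s))"
      by (auto intro!: derivative_eq_intros)
    from has_vector_derivative_real_field[OF this] show ?thesis .
  qed
  have dW: "(W N has_vector_derivative (- (exp (- (of_real s * \<mu>)) * r N s))) (at s within {0..t})"
    if s: "s \<in> {0..t}" for N s
  proof -
    have "(W N has_vector_derivative (exp (- (of_real s * \<mu>)) * (\<mu> * H N s - r N s) + exp (- (of_real s * \<mu>)) * (- \<mu>) * H N s)) (at s within {0..})"
      unfolding W_def by (rule has_vector_derivative_mult[OF dE dH]) (use s in auto)
    hence "(W N has_vector_derivative (exp (- (of_real s * \<mu>)) * (\<mu> * H N s - r N s) + exp (- (of_real s * \<mu>)) * (- \<mu>) * H N s)) (at s within {0..t})"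
      by (rule has_vector_derivative_within_subset) auto
    moreover have "exp (- (of_real s * \<mu>)) * (\<mu> * H N s - r N s) + exp (- (of_real s * \<mu>)) * (- \<mu>) * H N s = - (exp (- (of_real s * \<mu>)) * r N s)"
      by (simp add: algebra_simps)
    ultimately show ?thesis by simp
  qed
  define \<epsilon> where "\<epsilon> N = exp (t * norm \<mu>) * ((real N)^2 * norm b ^ N) * ((real c + 1)^2 * Zs * exp (Lf * t))" for N
  have bW: "norm (- (exp (- (of_real s * \<mu>)) * r N s)) \<le> \<epsilon> N" if s: "s \<in> {0..t}" for N s
  proof -
    have e: "norm (exp (- (of_real s * \<mu>))) \<le> exp (t * norm \<mu>)"
    proof -
      have "norm (exp (- (of_real s * \<mu>))) = exp (Re (- (of_real s * \<mu>)))" by (rule norm_exp_eq_Re)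
      also have "\<dots> \<le> exp (norm (- (of_real s * \<mu>)))" by (rule exp_le_cancel_iff[THEN iffD2, OF complex_Re_le_cmod])
      also have "norm (- (of_real s * \<mu>)) \<le> t * norm \<mu>" using s by (simp add: norm_mult mult_right_mono)
      finally show ?thesis by simp
    qed
    have rb: "norm (r N s) \<le> (real N)^2 * norm b ^ N * ((real c + 1)^2 * Zs * exp (Lf * t))"
    proof -
      have "norm (r N s) \<le> (\<Sum>p<N. norm b ^ N * ((real c + 1)^2 * Zs * exp (Lf * t) * real N))"
        unfolding r_def
      proof (rule sum_norm_le)
        fix p assume p: "p \<in> {..<N}"
        have "norm (\<Sum>m'\<le>c. tail (N - p) m' * of_real (Fp p m' s)) \<le> (\<Sum>m'\<le>c. norm b ^ (N - p) * Zs * (real N * (real c + 1) * exp (Lf * t)))"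
        proof (rule sum_norm_le)
          fix m' assume m': "m' \<in> {..c}"
          have f1: "\<bar>Fp p m' s\<bar> \<le> (real p + 1) * (real c + 1) * exp (Lf * s)" using Fb m' s by auto
          also have "\<dots> \<le> real N * (real c + 1) * exp (Lf * t)"
            using p s Lf by (intro mult_mono) (auto intro: mult_left_mono)
          finally have f2: "\<bar>Fp p m' s\<bar> \<le> real N * (real c + 1) * exp (Lf * t)" .
          have "norm (tail (N - p) m' * of_real (Fp p m' s)) = norm (tail (N - p) m') * \<bar>Fp p m' s\<bar>"
            by (simp add: norm_mult)
          also have "\<dots> \<le> (norm b ^ (N - p) * Zs) * (real N * (real c + 1) * exp (Lf * t))"
            using tailb[of m' "N - p"] m' f2 Zs0 by (intro mult_mono) auto
          finally show "norm (tail (N - p) m' * of_real (Fp p m' s)) \<le> norm b ^ (N - p) * Zs * (real N * (real c + 1) * exp (Lf * t))" .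
        qed
        also have "\<dots> = (real c + 1) * (norm b ^ (N - p) * Zs * (real N * (real c + 1) * exp (Lf * t)))"
          by simp
        finally have h: "norm (\<Sum>m'\<le>c. tail (N - p) m' * of_real (Fp p m' s)) \<le> (real c + 1) * (norm b ^ (N - p) * Zs * (real N * (real c + 1) * exp (Lf * t)))" .
        have "norm (b ^ p * (\<Sum>m'\<le>c. tail (N - p) m' * of_real (Fp p m' s))) \<le> norm b ^ p * ((real c + 1) * (norm b ^ (N - p) * Zs * (real N * (real c + 1) * exp (Lf * t))))"
          unfolding norm_mult norm_power by (intro mult_left_mono h) auto
        also have "\<dots> = norm b ^ (p + (N - p)) * ((real c + 1)^2 * Zs * exp (Lf * t) * real N)"
          by (simp add: power_add power2_eq_square mult_ac)
        also have "p + (N - p) = N" using p by auto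
        finally show "norm (b ^ p * (\<Sum>m'\<le>c. tail (N - p) m' * of_real (Fp p m' s))) \<le> norm b ^ N * ((real c + 1)^2 * Zs * exp (Lf * t) * real N)" .
      qed
      also have "\<dots> = (real N)^2 * norm b ^ N * ((real c + 1)^2 * Zs * exp (Lf * t))"
        by (simp add: power2_eq_square mult_ac)
      finally show ?thesis .
    qed
    have "norm (- (exp (- (of_real s * \<mu>)) * r N s)) = norm (exp (- (of_real s * \<mu>))) * norm (r N s)"
      by (simp add: norm_mult)
    also have "\<dots> \<le> exp (t * norm \<mu>) * ((real N)^2 * norm b ^ N * ((real c + 1)^2 * Zs * exp (Lf * t)))"
      using e rb by (intro mult_mono) auto
    finally show ?thesis unfolding \<epsilon>_def by (simp add: mult_ac)
  qed
  have mvt: "norm (W N t - W N 0) \<le> \<epsilon> N * t" for N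
  proof -
    have "norm (W N t - W N 0) \<le> \<epsilon> N * norm (t - 0)"
    proof (rule differentiable_bound[where f'="\<lambda>s h. h *\<^sub>R (- (exp (- (of_real s * \<mu>)) * r N s))"])
      show "convex {0..t}" by simp
      show "(W N has_derivative (\<lambda>h. h *\<^sub>R (- (exp (- (of_real s * \<mu>)) * r N s)))) (at s within {0..t})"
        if "s \<in> {0..t}" for s using dW[OF that] unfolding has_vector_derivative_def .
      show "onorm (\<lambda>h. h *\<^sub>R (- (exp (- (of_real s * \<mu>)) * r N s))) \<le> \<epsilon> N" if "s \<in> {0..t}" for s
      proof -
        have "onorm (\<lambda>h::real. h *\<^sub>R (- (exp (- (of_real s * \<mu>)) * r N s))) = onorm (\<lambda>h::real. h) * norm (- (exp (- (of_real s * \<mu>)) * r N s))"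
          by (rule onorm_scaleR_left[OF bounded_linear_ident])
        also have "\<dots> = norm (- (exp (- (of_real s * \<mu>)) * r N s))" by (simp add: onorm_id)
        finally show ?thesis using bW[OF that] by simp
      qed
    qed (use t in auto)
    thus ?thesis using t by simp
  qed
  define g where "g n = (\<Sum>m\<le>c. b^n * w m * of_real (Fp n m t))" for n
  define Sw where "Sw = (\<Sum>m\<le>c. w m)"
  have sg: "summable g"
  proof (rule summable_comparison_test)
    show "\<exists>N. \<forall>n\<ge>N. norm (g n) \<le> ((\<Sum>m\<le>c. norm (w m)) * (real c + 1) * exp (Lf * t)) * ((real n + 1) * norm b ^ n)"
    proof (intro exI allI impI)
      fix n :: nat
      have "norm (g n) \<le> (\<Sum>m\<le>c. norm (w m) * ((real n + 1) * (real c + 1) * exp (Lf * t)) * norm b ^ n)"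
        unfolding g_def
      proof (rule sum_norm_le)
        fix m assume m: "m \<in> {..c}"
        have "norm (b^n * w m * of_real (Fp n m t)) = norm b ^ n * norm (w m) * \<bar>Fp n m t\<bar>"
          by (simp add: norm_mult norm_power)
        also have "\<dots> \<le> norm b ^ n * norm (w m) * ((real n + 1) * (real c + 1) * exp (Lf * t))"
          using Fb m t by (intro mult_left_mono) auto
        finally show "norm (b^n * w m * of_real (Fp n m t)) \<le> norm (w m) * ((real n + 1) * (real c + 1) * exp (Lf * t)) * norm b ^ n"
          by (simp add: mult_ac)
      qed
      also have "\<dots> = (\<Sum>m\<le>c. norm (w m)) * (((real n + 1) * (real c + 1) * exp (Lf * t)) * norm b ^ n)"
        by (simp only: mult.assoc sum_distrib_right)
      also have "\<dots> = ((\<Sum>m\<le>c. norm (w m)) * (real c + 1) * exp (Lf * t)) * ((real n + 1) * norm b ^ n)"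
        by (simp add: mult_ac)
      finally show "norm (g n) \<le> ((\<Sum>m\<le>c. norm (w m)) * (real c + 1) * exp (Lf * t)) * ((real n + 1) * norm b ^ n)" .
    qed
    show "summable (\<lambda>n. ((\<Sum>m\<le>c. norm (w m)) * (real c + 1) * exp (Lf * t)) * ((real n + 1) * norm b ^ n))"
      using b by (intro summable_mult poly_geo_summable) auto
  qed
  have limHt: "(\<lambda>N. H N t) \<longlonglongrightarrow> suminf g"
    using summable_LIMSEQ[OF sg] unfolding H_def g_def .
  have H0: "H N 0 = Sw * (\<Sum>n<N. b^n)" for N
    unfolding H_def Sw_def using init by (simp add: sum_distrib_left sum_distrib_right mult_ac)
  have limH0: "(\<lambda>N. H N 0) \<longlonglongrightarrow> Sw * (1 / (1 - b))"
    unfolding H0 by (intro tendsto_mult tendsto_const) (use geometric_sums[OF b] in \<open>simp add: sums_def\<close>)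
  have limeps: "(\<lambda>N. \<epsilon> N * t) \<longlonglongrightarrow> 0"
  proof -
    have "(\<lambda>N. exp (t * norm \<mu>) * ((real N)^2 * norm b ^ N) * ((real c + 1)^2 * Zs * exp (Lf * t)) * t) \<longlonglongrightarrow> exp (t * norm \<mu>) * 0 * ((real c + 1)^2 * Zs * exp (Lf * t)) * t"
      by (intro tendsto_mult tendsto_const poly2_geo_lim) (use b in auto)
    thus ?thesis unfolding \<epsilon>_def by simp
  qed
  define e where "e = exp (- (of_real t * \<mu>))"
  have WtN: "W N t - W N 0 = e * H N t - H N 0" for N unfolding W_def e_def by simp
  have limD: "(\<lambda>N. W N t - W N 0) \<longlonglongrightarrow> e * suminf g - Sw * (1 / (1 - b))"
    unfolding WtN by (intro tendsto_diff tendsto_mult tendsto_const limHt limH0)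
  have "norm (e * suminf g - Sw * (1 / (1 - b))) \<le> 0"
    by (rule LIMSEQ_le[OF tendsto_norm[OF limD] limeps]) (use mvt in auto)
  hence eq: "e * suminf g = Sw * (1 / (1 - b))" by simp
  have "exp (of_real t * \<mu>) * e = 1" unfolding e_def by (simp add: exp_minus)
  hence "suminf g = exp (of_real t * \<mu>) * (Sw * (1 / (1 - b)))"
    by (metis eq mult.assoc mult_1)
  thus ?thesis unfolding g_def Sw_def \<mu>_def by (simp add: mult_ac)
qed



lemma rsum_abs: "(x::int\<Rightarrow>real) summable_on A \<Longrightarrow> (\<lambda>k. \<bar>x k\<bar>) summable_on A"
  using summable_on_iff_abs_summable_on_real[of x A] by simp

lemma gsum:
  fixes x :: "int \<Rightarrow> real" and b :: complex
  assumes b: "norm b \<le> 1" and x: "x summable_on {..int K}" and S: "S \<subseteq> {..int K}"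
  shows "(\<lambda>k. of_real (x k) * b ^ nat (int K - k)) summable_on S"
proof (rule abs_summable_summable)
  have xa: "(\<lambda>k. \<bar>x k\<bar>) summable_on S" using rsum_abs[OF summable_on_subset[OF x S]] .
  show "(\<lambda>k. norm (of_real (x k) * b ^ nat (int K - k))) summable_on S"
  proof (rule summable_on_comparison_test[OF xa])
    fix k
    have "norm b ^ nat (int K - k) \<le> 1" using b by (simp add: power_le_one)
    thus "norm (of_real (x k) * b ^ nat (int K - k)) \<le> \<bar>x k\<bar>"
      by (simp add: norm_mult norm_power mult_left_le)
  qed simp
qed

lemma negimg: "(\<lambda>k::nat. - int (Suc k)) ` UNIV = {..-1::int}"
proof (intro equalityI subsetI)
  fix z :: int assume "z \<in> {..-1}"
  hence "z = - int (Suc (nat (- z - 1)))" by auto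
  thus "z \<in> (\<lambda>k::nat. - int (Suc k)) ` UNIV" by blast
qed auto

lemma neg_inj: "inj_on (\<lambda>k::nat. - int (Suc k)) UNIV" by (auto simp: inj_on_def)

lemma neg_sums:
  fixes x :: "int \<Rightarrow> real" and b :: complex
  assumes b: "norm b \<le> 1" and x: "x summable_on {..int K}"
  shows "(\<lambda>k. of_real (x (- int (Suc k))) * b ^ (K + Suc k)) sums infsum (\<lambda>k. of_real (x k) * b ^ nat (int K - k)) {..-1}"
proof -
  have "((\<lambda>k. of_real (x k) * b ^ nat (int K - k)) has_sum infsum (\<lambda>k. of_real (x k) * b ^ nat (int K - k)) {..-1}) {..-1}"
    by (rule has_sum_infsum[OF gsum[OF b x]]) auto
  hence "((\<lambda>k. of_real (x k) * b ^ nat (int K - k)) has_sum infsum (\<lambda>k. of_real (x k) * b ^ nat (int K - k)) {..-1}) ((\<lambda>k::nat. - int (Suc k)) ` UNIV)"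
    unfolding negimg .
  hence "(((\<lambda>k. of_real (x k) * b ^ nat (int K - k)) \<circ> (\<lambda>k::nat. - int (Suc k))) has_sum infsum (\<lambda>k. of_real (x k) * b ^ nat (int K - k)) {..-1}) UNIV"
    using has_sum_reindex[OF neg_inj] by blast
  moreover have "((\<lambda>k. of_real (x k) * b ^ nat (int K - k)) \<circ> (\<lambda>k::nat. - int (Suc k))) = (\<lambda>k. of_real (x (- int (Suc k))) * b ^ (K + Suc k))"
  proof
    fix k :: nat
    have "nat (int K - - int (Suc k)) = K + Suc k" by simp
    thus "((\<lambda>k. of_real (x k) * b ^ nat (int K - k)) \<circ> (\<lambda>k::nat. - int (Suc k))) k = of_real (x (- int (Suc k))) * b ^ (K + Suc k)"
      by (simp only: comp_def)
  qed
  ultimately show ?thesis by (intro has_sum_imp_sums) simp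
qed

lemma rate_summable_nat:
  fixes x :: "int \<Rightarrow> real"
  assumes x: "x summable_on {..int K}"
  shows "summable (\<lambda>k. \<bar>x (- int (Suc k))\<bar>)"
proof -
  have "(\<lambda>k. \<bar>x k\<bar>) summable_on ((\<lambda>k::nat. - int (Suc k)) ` UNIV)"
    unfolding negimg by (rule rsum_abs[OF summable_on_subset[OF x]]) auto
  hence "((\<lambda>k. \<bar>x k\<bar>) \<circ> (\<lambda>k::nat. - int (Suc k))) summable_on UNIV"
    using summable_on_reindex[OF neg_inj] by blast
  hence "(\<lambda>k. \<bar>x (- int (Suc k))\<bar>) summable_on UNIV" by (simp add: comp_def)
  thus ?thesis by (subst (asm) summable_on_UNIV_nonneg_real_iff) auto
qed

lemma genf_split:
  fixes x :: "int \<Rightarrow> real" and b :: complex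
  assumes b: "norm b \<le> 1" and x: "x summable_on {..int K}"
  shows "genf K x b = infsum (\<lambda>k. of_real (x k) * b ^ nat (int K - k)) {..-1}
     + (\<Sum>k\<in>{0..int K}. of_real (x k) * b ^ nat (int K - k))"
proof -
  have "{..int K} = {..-1} \<union> {0..int K}" by auto
  hence "genf K x b = infsum (\<lambda>k. of_real (x k) * b ^ nat (int K - k)) ({..-1} \<union> {0..int K})"
    unfolding genf_def by simp
  also have "\<dots> = infsum (\<lambda>k. of_real (x k) * b ^ nat (int K - k)) {..-1} + infsum (\<lambda>k. of_real (x k) * b ^ nat (int K - k)) {0..int K}"
    by (rule infsum_Un_disjoint) (auto intro: gsum[OF b x])
  finally show ?thesis by simp
qed

lemma colsum:
  fixes w :: "nat \<Rightarrow> complex"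
  assumes w: "w (Suc c) = 0" and m': "m' \<le> c"
  shows "(\<Sum>m\<le>c. w m * of_real (Lam c K ra rb rc rd k m m'))
    = of_real (ra k) * (of_nat c - of_nat m' + 1) * (if m' = 0 then 0 else w (m' - 1))
      + of_real (rd k) * (of_nat m' + 1) * w (m' + 1)
      + (of_real (rb k) * (of_nat c - of_nat m') + of_real (rc k) * of_nat m'
         - (if k = 0 then of_real (infsum (\<lambda>l. (ra l + rb l) * (real c - real m') + (rc l + rd l) * real m') {..int K}) else 0)) * w m'"
proof -
  define dg where "dg m = rb k * (real c - real m) + rc k * real m
        - (if k = 0 then infsum (\<lambda>l. (ra l + rb l) * (real c - real m) + (rc l + rd l) * real m) {..int K} else 0)" for m
  have pw: "w m * of_real (Lam c K ra rb rc rd k m m') =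
      (if m' = 0 then 0 else if m = m' - 1 then w m * of_real (ra k * (real c - real m)) else 0)
    + (if m = m' + 1 then w m * of_real (rd k * real m) else 0)
    + (if m = m' then w m * of_real (dg m) else 0)" for m
    unfolding Lam_def dg_def by auto
  have s1: "(\<Sum>m\<le>c. (if m' = 0 then 0 else if m = m' - 1 then w m * of_real (ra k * (real c - real m)) else 0))
      = of_real (ra k) * (of_nat c - of_nat m' + 1) * (if m' = 0 then 0 else w (m' - 1))"
  proof (cases "m' = 0")
    case False
    hence "real (m' - 1) = real m' - 1" by auto
    moreover have "m' - Suc 0 \<le> c" using m' by auto
    ultimately show ?thesis using False m' by (simp add: sum.delta algebra_simps)
  qed simp
  have s2: "(\<Sum>m\<le>c. (if m = m' + 1 then w m * of_real (rd k * real m) else 0)) = of_real (rd k) * (of_nat m' + 1) * w (m' + 1)"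
  proof (cases "m' = c")
    case True thus ?thesis using w by (simp add: sum.delta)
  next
    case False thus ?thesis using m' by (simp add: sum.delta algebra_simps)
  qed
  have s3: "(\<Sum>m\<le>c. (if m = m' then w m * of_real (dg m) else 0)) = w m' * of_real (dg m')"
    using m' by (simp add: sum.delta)
  show ?thesis unfolding pw sum.distrib s1 s2 s3 dg_def using m'
    by (simp add: algebra_simps of_nat_diff)
qed

lemma finsplit: "(\<Sum>k\<in>{0..int K}. f k) = f 0 + (\<Sum>i\<in>{1..K}. f (int i))"
proof -
  have "{0..int K} = insert 0 (int ` {1..K})"
  proof (intro equalityI subsetI)
    fix z assume z: "z \<in> {0..int K}"
    show "z \<in> insert 0 (int ` {1..K})"
    proof (cases "z = 0")
      case False
      hence "z = int (nat z)" "nat z \<in> {1..K}" using z by auto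
      thus ?thesis by blast
    qed simp
  qed auto
  moreover have "0 \<notin> int ` {1..K}" by auto
  ultimately have "(\<Sum>k\<in>{0..int K}. f k) = f 0 + (\<Sum>k\<in>int ` {1..K}. f k)" by simp
  also have "(\<Sum>k\<in>int ` {1..K}. f k) = (\<Sum>i\<in>{1..K}. f (int i))" by (simp add: sum.reindex)
  finally show ?thesis .
qed

lemma omega_big: "omega c \<beta> (Suc c) = 0"
proof -
  have e: "{I. I \<subseteq> {1..c} \<and> card I = Suc c} = {}"
  proof (intro equalityI subsetI)
    fix I assume "I \<in> {I. I \<subseteq> {1..c} \<and> card I = Suc c}"
    hence "I \<subseteq> {1..c}" "card I = Suc c" by auto
    hence "card I \<le> c" using card_mono[of "{1..c}" I] by auto
    thus "I \<in> {}" using \<open>card I = Suc c\<close> by simp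
  qed auto
  show ?thesis unfolding omega_def e by simp
qed

lemma kernel:
  fixes c K :: nat and ra rb rc rd :: "int \<Rightarrow> real" and b P Q :: complex and \<beta>v :: "nat \<Rightarrow> complex" and lam :: "nat \<Rightarrow> real"
  assumes c1: "1 \<le> c"
  and sa: "ra summable_on {..int K}" and sb: "rb summable_on {..int K}"
  and sc: "rc summable_on {..int K}" and sd: "rd summable_on {..int K}"
  and b: "norm b < 1" "b \<noteq> 0"
  and D: "\<forall>i\<in>{1..K}. \<forall>m\<le>c. \<forall>m'\<le>c. Lam c K ra rb rc rd (int i) m m' = (if m = m' then lam i else 0)"
  and P_def: "P = b^K * of_real (genf1 K ra + genf1 K rb)" and Q_def: "Q = b^K * of_real (genf1 K rc + genf1 K rd)"
  and quad: "\<forall>i\<in>{1..c}. genf K rd b * \<beta>v i ^ 2 = (P - Q - genf K rb b + genf K rc b) * \<beta>v i + genf K ra b"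
  and sumg: "(\<Sum>i\<in>{1..c}. genf K rd b * \<beta>v i + genf K rb b - P) = 0"
  shows "\<forall>m'\<le>c. (\<lambda>k. b^k * (\<Sum>m\<le>c. omega c \<beta>v m * of_real (Lam c K ra rb rc rd (- int k) m m')))
     sums (- (\<Sum>i\<in>{1..K}. of_real (lam i) / b^i) * omega c \<beta>v m')"
proof (intro allI impI)
  fix m' assume m': "m' \<le> c"
  define w where "w = omega c \<beta>v"
  have wom: "w = om {1..c} \<beta>v" unfolding w_def by (rule ext) (simp add: omega_def om_def)
  have wc: "w (Suc c) = 0" unfolding w_def by (rule omega_big)
  define Ag where "Ag = genf K ra b"
  define Bg where "Bg = genf K rb b"
  define Cg where "Cg = genf K rc b"
  define Dg where "Dg = genf K rd b"
  have KI0: "KI Ag Bg Cg Dg P Q w c m' = 0"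
  proof -
    have "KI Ag Bg Cg Dg P Q (om {1..c} \<beta>v) (card {1..c}) m' = (\<Sum>i\<in>{1..c}. Dg * \<beta>v i + Bg - P) * om {1..c} \<beta>v m'"
      by (rule KI_om) (use quad in \<open>auto simp: Ag_def Bg_def Cg_def Dg_def\<close>)
    thus ?thesis using sumg unfolding wom Dg_def Bg_def by simp
  qed
  define wp where "wp = (if m' = 0 then 0 else w (m' - 1))"
  have Dcons: "ra (int i) = 0" "rd (int i) = 0"
     "of_real (rb (int i)) * (of_nat c - of_nat m') + of_real (rc (int i)) * of_nat m' = (of_real (lam i) :: complex)"
    if i: "i \<in> {1..K}" for i
  proof -
    have "Lam c K ra rb rc rd (int i) 0 1 = 0" using D i c1 by auto
    thus "ra (int i) = 0" using c1 unfolding Lam_def by simp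
    have "Lam c K ra rb rc rd (int i) 1 0 = 0" using D i c1 by auto
    thus "rd (int i) = 0" unfolding Lam_def by simp
    have "Lam c K ra rb rc rd (int i) m' m' = lam i" using D i m' by auto
    hence "rb (int i) * (real c - real m') + rc (int i) * real m' = lam i" using i unfolding Lam_def by simp
    hence "(of_real (rb (int i) * (real c - real m') + rc (int i) * real m') :: complex) = of_real (lam i)" by simp
    thus "of_real (rb (int i)) * (of_nat c - of_nat m') + of_real (rc (int i)) * of_nat m' = (of_real (lam i) :: complex)"
      by simp
  qed
  define N where "N x = infsum (\<lambda>k. of_real (x k) * b ^ nat (int K - k)) {..-1}" for x :: "int \<Rightarrow> real"
  have bK: "nat (int K - int i) = K - i" for i by simp
  have b1: "norm b \<le> 1" using b by simp
  have Agf: "Ag = N ra + of_real (ra 0) * b^K"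
    unfolding Ag_def N_def genf_split[OF b1 sa] finsplit using Dcons(1) by simp
  have Dgf: "Dg = N rd + of_real (rd 0) * b^K"
    unfolding Dg_def N_def genf_split[OF b1 sd] finsplit using Dcons(2) by simp
  have BCf: "Bg * (of_nat c - of_nat m') + Cg * of_nat m' = N rb * (of_nat c - of_nat m') + N rc * of_nat m'
      + b^K * (of_real (rb 0) * (of_nat c - of_nat m') + of_real (rc 0) * of_nat m') + (\<Sum>i\<in>{1..K}. of_real (lam i) * b ^ (K - i))"
  proof -
    have "(\<Sum>i\<in>{1..K}. of_real (rb (int i)) * b ^ (K - i)) * (of_nat c - of_nat m') + (\<Sum>i\<in>{1..K}. of_real (rc (int i)) * b ^ (K - i)) * of_nat m'
      = (\<Sum>i\<in>{1..K}. (of_real (rb (int i)) * (of_nat c - of_nat m') + of_real (rc (int i)) * of_nat m') * b ^ (K - i))"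
      by (simp only: sum_distrib_right sum.distrib[symmetric]) (rule sum.cong, simp_all add: algebra_simps)
    also have "\<dots> = (\<Sum>i\<in>{1..K}. of_real (lam i) * b ^ (K - i))"
      by (rule sum.cong) (use Dcons(3) in auto)
    finally have e: "(\<Sum>i\<in>{1..K}. of_real (rb (int i)) * b ^ (K - i)) * (of_nat c - of_nat m') + (\<Sum>i\<in>{1..K}. of_real (rc (int i)) * b ^ (K - i)) * of_nat m'
      = (\<Sum>i\<in>{1..K}. of_real (lam i) * b ^ (K - i))" .
    show ?thesis unfolding Bg_def Cg_def N_def genf_split[OF b1 sb] genf_split[OF b1 sc] finsplit bK
      using e by (simp add: algebra_simps)
  qed
  define T where "T = infsum (\<lambda>l. (ra l + rb l) * (real c - real m') + (rc l + rd l) * real m') {..int K}"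
  have Tf: "T = (genf1 K ra + genf1 K rb) * (real c - real m') + (genf1 K rc + genf1 K rd) * real m'"
  proof -
    have "((\<lambda>l. (ra l + rb l) * (real c - real m') + (rc l + rd l) * real m') has_sum
       ((genf1 K ra + genf1 K rb) * (real c - real m') + (genf1 K rc + genf1 K rd) * real m')) {..int K}"
      unfolding genf1_def
      by (intro has_sum_add has_sum_cmult_left has_sum_infsum sa sb sc sd)
    thus ?thesis unfolding T_def by (rule infsumI)
  qed
  have PQT: "P * (of_nat c - of_nat m') + Q * of_nat m' = b^K * of_real T"
    unfolding P_def Q_def Tf using m' by (simp add: algebra_simps of_nat_diff)
  define col0 where "col0 = of_real (ra 0) * (of_nat c - of_nat m' + 1) * wp + of_real (rd 0) * (of_nat m' + 1) * w (m' + 1)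
      + (of_real (rb 0) * (of_nat c - of_nat m') + of_real (rc 0) * of_nat m' - of_real T) * w m'"
  define Nst where "Nst = N ra * (of_nat c - of_nat m' + 1) * wp + N rd * (of_nat m' + 1) * w (m' + 1)
      + (N rb * (of_nat c - of_nat m') + N rc * of_nat m') * w m'"
  have E1: "Nst + b^K * col0 + (\<Sum>i\<in>{1..K}. of_real (lam i) * b ^ (K - i)) * w m' = 0"
  proof -
    have "KI Ag Bg Cg Dg P Q w c m' = Ag * (of_nat c - of_nat m' + 1) * wp + Dg * (of_nat m' + 1) * w (m' + 1)
       + ((Bg * (of_nat c - of_nat m') + Cg * of_nat m') - (P * (of_nat c - of_nat m') + Q * of_nat m')) * w m'"
      unfolding KI_def wp_def by (simp add: algebra_simps)
    also have "\<dots> = Nst + b^K * col0 + (\<Sum>i\<in>{1..K}. of_real (lam i) * b ^ (K - i)) * w m'"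
      unfolding BCf PQT Agf Dgf Nst_def col0_def by (simp add: algebra_simps)
    finally show ?thesis using KI0 by simp
  qed
  have col0_eq: "(\<Sum>m\<le>c. w m * of_real (Lam c K ra rb rc rd (- int 0) m m')) = col0"
    unfolding colsum[where w=w and c=c, OF wc m'] col0_def T_def wp_def by simp
  have colk: "b ^ Suc k * (\<Sum>m\<le>c. w m * of_real (Lam c K ra rb rc rd (- int (Suc k)) m m'))
     = (of_real (ra (- int (Suc k))) * b ^ Suc k) * (of_nat c - of_nat m' + 1) * wp
      + (of_real (rd (- int (Suc k))) * b ^ Suc k) * (of_nat m' + 1) * w (m' + 1)
      + ((of_real (rb (- int (Suc k))) * b ^ Suc k) * (of_nat c - of_nat m') + (of_real (rc (- int (Suc k))) * b ^ Suc k) * of_nat m') * w m'" for k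
    unfolding colsum[where w=w and c=c, OF wc m'] wp_def by (simp add: algebra_simps)
  have ns: "(\<lambda>k. of_real (x (- int (Suc k))) * b ^ Suc k) sums (N x / b^K)" if x: "x summable_on {..int K}" for x
  proof -
    have "(\<lambda>k. of_real (x (- int (Suc k))) * b ^ (K + Suc k) / b^K) sums (N x / b^K)"
      unfolding N_def by (rule sums_divide[OF neg_sums[OF b1 x]])
    moreover have "of_real (x (- int (Suc k))) * b ^ (K + Suc k) / b^K = of_real (x (- int (Suc k))) * b ^ Suc k" for k
      using b(2) by (simp add: power_add)
    ultimately show ?thesis by simp
  qed
  have S1: "(\<lambda>k. b ^ Suc k * (\<Sum>m\<le>c. w m * of_real (Lam c K ra rb rc rd (- int (Suc k)) m m'))) sums (Nst / b^K)"
  proof -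
    have "(\<lambda>k. (of_real (ra (- int (Suc k))) * b ^ Suc k) * (of_nat c - of_nat m' + 1) * wp
      + (of_real (rd (- int (Suc k))) * b ^ Suc k) * (of_nat m' + 1) * w (m' + 1)
      + ((of_real (rb (- int (Suc k))) * b ^ Suc k) * (of_nat c - of_nat m') + (of_real (rc (- int (Suc k))) * b ^ Suc k) * of_nat m') * w m')
      sums ((N ra / b^K) * (of_nat c - of_nat m' + 1) * wp + (N rd / b^K) * (of_nat m' + 1) * w (m' + 1)
        + ((N rb / b^K) * (of_nat c - of_nat m') + (N rc / b^K) * of_nat m') * w m')"
      by (intro sums_add sums_mult2 ns sa sb sc sd)
    moreover have "(N ra / b^K) * (of_nat c - of_nat m' + 1) * wp + (N rd / b^K) * (of_nat m' + 1) * w (m' + 1)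
        + ((N rb / b^K) * (of_nat c - of_nat m') + (N rc / b^K) * of_nat m') * w m' = Nst / b^K"
      unfolding Nst_def using b(2) by (simp add: field_simps)
    ultimately show ?thesis unfolding colk by simp
  qed
  have "(\<lambda>k. b^k * (\<Sum>m\<le>c. w m * of_real (Lam c K ra rb rc rd (- int k) m m'))) sums (Nst / b^K + b^0 * col0)"
    using S1 col0_eq by (subst (asm) sums_Suc_iff) simp
  moreover have "Nst / b^K + b^0 * col0 = - (\<Sum>i\<in>{1..K}. of_real (lam i) / b^i) * w m'"
  proof -
    have bKi: "b ^ (K - i) / b ^ K = 1 / b ^ i" if "i \<in> {1..K}" for i
    proof -
      have "b ^ K = b ^ (K - i) * b ^ i" using that by (simp add: power_add[symmetric])
      thus ?thesis using b(2) by (simp add: field_simps)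
    qed
    have "Nst / b^K + col0 = - ((\<Sum>i\<in>{1..K}. of_real (lam i) * b ^ (K - i)) / b^K) * w m'"
    proof -
      have e: "Nst = - (b^K * col0 + (\<Sum>i\<in>{1..K}. of_real (lam i) * b ^ (K - i)) * w m')"
        using E1 unfolding add.assoc by (rule eq_neg_iff_add_eq_0[THEN iffD2])
      show ?thesis unfolding e using b(2) by (simp add: field_simps)
    qed
    also have "(\<Sum>i\<in>{1..K}. of_real (lam i) * b ^ (K - i)) / b^K = (\<Sum>i\<in>{1..K}. of_real (lam i) / b^i)"
      unfolding sum_divide_distrib
    proof (rule sum.cong[OF refl])
      fix i assume i: "i \<in> {1..K}"
      have "of_real (lam i) * b ^ (K - i) / b ^ K = of_real (lam i) * (b ^ (K - i) / b ^ K)" by simp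
      also have "\<dots> = of_real (lam i) / b ^ i" using bKi[OF i] by simp
      finally show "of_real (lam i) * b ^ (K - i) / b ^ K = of_real (lam i) / b ^ i" .
    qed
    finally show ?thesis by simp
  qed
  ultimately show "(\<lambda>k. b^k * (\<Sum>m\<le>c. omega c \<beta>v m * of_real (Lam c K ra rb rc rd (- int k) m m')))
     sums (- (\<Sum>i\<in>{1..K}. of_real (lam i) / b^i) * omega c \<beta>v m')" unfolding w_def by simp
qed



lemma genf0: "genf K x 0 = of_real (x (int K))"
proof -
  have "genf K x 0 = infsum (\<lambda>k. of_real (x k) * (0::complex) ^ nat (int K - k)) {int K}"
    unfolding genf_def by (rule infsum_cong_neutral) auto
  thus ?thesis by simp
qed

lemma Lam_bound:
  assumes "k \<noteq> 0" "m \<le> c" "m' \<le> c"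
  shows "\<bar>Lam c K ra rb rc rd k m m'\<bar> \<le> real c * (\<bar>ra k\<bar> + \<bar>rb k\<bar> + \<bar>rc k\<bar> + \<bar>rd k\<bar>)"
proof -
  have c1: "\<bar>real c - real m\<bar> \<le> real c" "real m \<le> real c" "0 \<le> real c - real m" using assms by auto
  have "\<bar>ra k * (real c - real m)\<bar> \<le> \<bar>ra k\<bar> * real c" using c1 by (simp add: abs_mult mult_left_mono)
  moreover have "\<bar>rd k * real m\<bar> \<le> \<bar>rd k\<bar> * real c" using c1 by (simp add: abs_mult mult_left_mono)
  moreover have "\<bar>rb k * (real c - real m) + rc k * real m\<bar> \<le> \<bar>rb k\<bar> * real c + \<bar>rc k\<bar> * real c"
  proof -
    have "\<bar>rb k * (real c - real m) + rc k * real m\<bar> \<le> \<bar>rb k * (real c - real m)\<bar> + \<bar>rc k * real m\<bar>" by (rule abs_triangle_ineq)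
    also have "\<dots> \<le> \<bar>rb k\<bar> * real c + \<bar>rc k\<bar> * real c" using c1 by (intro add_mono) (auto simp: abs_mult mult_left_mono)
    finally show ?thesis .
  qed
  moreover have nn: "0 \<le> real c * \<bar>ra k\<bar>" "0 \<le> real c * \<bar>rb k\<bar>" "0 \<le> real c * \<bar>rc k\<bar>" "0 \<le> real c * \<bar>rd k\<bar>" by simp_all
  ultimately show ?thesis unfolding Lam_def using assms(1) apply (auto simp: algebra_simps) using nn by linarith+
qed

lemma Lam_summable:
  assumes sa: "ra summable_on {..int K}" and sb: "rb summable_on {..int K}"
  and sc: "rc summable_on {..int K}" and sd: "rd summable_on {..int K}"
  shows "summable (\<lambda>k. \<Sum>m\<le>c. \<Sum>m'\<le>c. \<bar>Lam c K ra rb rc rd (- int (Suc k)) m m'\<bar>)"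
proof (rule summable_comparison_test)
  define \<sigma> where "\<sigma> k = \<bar>ra (- int (Suc k))\<bar> + \<bar>rb (- int (Suc k))\<bar> + \<bar>rc (- int (Suc k))\<bar> + \<bar>rd (- int (Suc k))\<bar>" for k
  show "summable (\<lambda>k. (real c + 1) * (real c + 1) * real c * \<sigma> k)"
    unfolding \<sigma>_def by (intro summable_mult summable_add rate_summable_nat[OF sa] rate_summable_nat[OF sb] rate_summable_nat[OF sc] rate_summable_nat[OF sd])
  show "\<exists>N. \<forall>n\<ge>N. norm (\<Sum>m\<le>c. \<Sum>m'\<le>c. \<bar>Lam c K ra rb rc rd (- int (Suc n)) m m'\<bar>) \<le> (real c + 1) * (real c + 1) * real c * \<sigma> n"
  proof (intro exI allI impI)
    fix n :: nat
    have "(\<Sum>m\<le>c. \<Sum>m'\<le>c. \<bar>Lam c K ra rb rc rd (- int (Suc n)) m m'\<bar>) \<le> (\<Sum>m\<le>c. \<Sum>m'\<le>c. real c * \<sigma> n)"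
      unfolding \<sigma>_def by (intro sum_mono Lam_bound) auto
    also have "\<dots> = (real c + 1) * (real c + 1) * real c * \<sigma> n" by (simp add: algebra_simps)
    finally show "norm (\<Sum>m\<le>c. \<Sum>m'\<le>c. \<bar>Lam c K ra rb rc rd (- int (Suc n)) m m'\<bar>) \<le> (real c + 1) * (real c + 1) * real c * \<sigma> n"
      by (simp add: sum_nonneg)
  qed
qed

lemma quad_alg:
  fixes D F R A x :: complex
  assumes D: "D \<noteq> 0" and x: "x^2 = 1" and R: "R^2 = F^2 + 4*A*D"
  shows "D * ((F + x*R)/(2*D))^2 = F * ((F + x*R)/(2*D)) + A"
proof -
  have "D * ((F + x*R)/(2*D))^2 - (F * ((F + x*R)/(2*D)) + A) = (x^2 * R^2 - (F^2 + 4*A*D)) / (4*D)"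
    using D by (simp add: field_simps power2_eq_square)
  also have "\<dots> = 0" using x R by simp
  finally show ?thesis by simp
qed

lemma zsum_lemma:
  fixes La :: "int \<Rightarrow> nat \<Rightarrow> nat \<Rightarrow> real" and w :: "nat \<Rightarrow> complex"
  assumes s: "summable (\<lambda>k. \<Sum>m\<le>c. \<Sum>m'\<le>c. \<bar>La (- int (Suc k)) m m'\<bar>)" and m': "m' \<le> c"
  shows "summable (\<lambda>k. norm (\<Sum>m\<le>c. w m * of_real (La (- int k) m m')))"
proof -
  define f where "f k = (\<Sum>m\<le>c. \<Sum>m'\<le>c. \<bar>La (- int k) m m'\<bar>)" for k :: nat
  have sf: "summable f" using s unfolding f_def by (subst summable_Suc_iff[symmetric]) simp
  define Wn where "Wn = (\<Sum>m\<le>c. norm (w m))"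
  show ?thesis
  proof (rule summable_comparison_test[OF _ summable_mult[OF sf, of Wn]])
    show "\<exists>N. \<forall>n\<ge>N. norm (norm (\<Sum>m\<le>c. w m * of_real (La (- int n) m m'))) \<le> Wn * f n"
    proof (intro exI allI impI)
      fix n :: nat
      have "norm (\<Sum>m\<le>c. w m * of_real (La (- int n) m m')) \<le> (\<Sum>m\<le>c. Wn * (\<Sum>m''\<le>c. \<bar>La (- int n) m m''\<bar>))"
      proof (rule sum_norm_le)
        fix m assume m: "m \<in> {..c}"
        have "norm (w m) \<le> Wn" unfolding Wn_def by (rule member_le_sum[where f="\<lambda>m. norm (w m)"]) (use m in auto)
        moreover have "\<bar>La (- int n) m m'\<bar> \<le> (\<Sum>m''\<le>c. \<bar>La (- int n) m m''\<bar>)"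
          by (rule member_le_sum[where f="\<lambda>m''. \<bar>La (- int n) m m''\<bar>"]) (use m' in auto)
        ultimately show "norm (w m * of_real (La (- int n) m m')) \<le> Wn * (\<Sum>m''\<le>c. \<bar>La (- int n) m m''\<bar>)"
          unfolding norm_mult norm_of_real by (rule mult_mono) (auto simp: Wn_def intro: sum_nonneg)
      qed
      also have "\<dots> = Wn * f n" unfolding f_def by (simp add: sum_distrib_left)
      finally show "norm (norm (\<Sum>m\<le>c. w m * of_real (La (- int n) m m'))) \<le> Wn * f n" by simp
    qed
  qed
qed

theorem theorem4:
  fixes c K :: nat
    and ra rb rc rd :: "int \<Rightarrow> real"
    and V :: "'v set" and q :: "'v st \<Rightarrow> 'v st \<Rightarrow> real" and p :: "'v st \<Rightarrow> real"
    and R :: "complex \<Rightarrow> complex"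
    and \<eta> :: "nat \<Rightarrow> real" and \<beta>0 :: "nat \<Rightarrow> complex" and x :: "nat \<Rightarrow> nat \<Rightarrow> real"
    and \<gamma> :: "nat \<Rightarrow> complex"
    and lam :: "nat \<Rightarrow> real"
    and Fp :: "nat \<Rightarrow> nat \<Rightarrow> real \<Rightarrow> real"
  assumes c_pos: "1 \<le> c" and K_pos: "1 \<le> K"
    and rates_nonneg: "\<forall>k\<le>int K. 0 \<le> ra k \<and> 0 \<le> rb k \<and> 0 \<le> rc k \<and> 0 \<le> rd k"
    and process: "sym_process c K ra rb rc rd V q"
    and irred: "irreducible_on (Sset V c) q"
    \<comment> \<open>Assumption (A)\<close>
    and A_i: "ra summable_on {..int K}" "rb summable_on {..int K}"
             "rc summable_on {..int K}" "rd summable_on {..int K}"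
    and A_ii: "0 < genf1 K ra" "0 < genf1 K rd"
    and A_iii: "(\<lambda>k. real_of_int (int K - k) * ra k) summable_on {..int K}"
               "(\<lambda>k. real_of_int (int K - k) * rb k) summable_on {..int K}"
               "(\<lambda>k. real_of_int (int K - k) * rc k) summable_on {..int K}"
               "(\<lambda>k. real_of_int (int K - k) * rd k) summable_on {..int K}"
    and A_iv: "ra (int K) = 0 \<or> rd (int K) = 0"
    and A_v: "rb (int K) = rc (int K)" "rc (int K) \<noteq> 0"
    \<comment> \<open>Ergodicity (E_s)\<close>
    and E_s: "0 < genf1 K rd * (dgenf1 K ra - real K * genf1 K ra + dgenf1 K rb - real K * genf1 K rb)
                + genf1 K ra * (dgenf1 K rc - real K * genf1 K rc + dgenf1 K rd - real K * genf1 K rd)"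
    \<comment> \<open>R is a fixed square root of F^2 + 4AD on the open unit disc\<close>
    and R_sqrt: "\<forall>z. cmod z < 1 \<longrightarrow>
        R z ^ 2 = Fz K ra rb rc rd z ^ 2 + 4 * genf K ra z * genf K rd z"
    \<comment> \<open>Assumptions (B), (C)\<close>
    and B_C: "\<forall>(e, b)\<in>rootpairs c K ra rb rc rd R.
        Fz K ra rb rc rd b ^ 2 + 4 * genf K ra b * genf K rd b \<noteq> 0 \<and> genf K rd b \<noteq> 0"
    \<comment> \<open>Assumption (D)\<close>
    and D_assm: "\<forall>i\<in>{1..K}. 0 \<le> lam i \<and> (\<forall>m\<le>c. \<forall>m'\<le>c.
        Lam c K ra rb rc rd (int i) m m' = (if m = m' then lam i else 0))"
    \<comment> \<open>the enumeration of the pairs (eta^(j), beta_{0,j}), j = 1..K(c+1)\<close>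
    and pairs: "bij_betw (\<lambda>j. (\<eta> j, \<beta>0 j)) {1..K * (c + 1)} (rootpairs c K ra rb rc rd R)"
    and x_def: "\<forall>j\<in>{1..K * (c + 1)}. (\<forall>i\<in>{1..c}. x j i \<in> {-1, 1})
                  \<and> - (1 / real c) * (\<Sum>i\<in>{1..c}. x j i) = \<eta> j"
    \<comment> \<open>equilibrium distribution and the constants gamma_j\<close>
    and equil: "equilibrium (Sset V c) q p"
    and gamma: "\<forall>n0 m. m \<le> c \<longrightarrow> complex_of_real (pagg c p n0 m) =
        (\<Sum>j\<in>{1..K * (c + 1)}. \<gamma> j * \<beta>0 j ^ n0 *
           omega c (\<lambda>i. (Fz K ra rb rc rd (\<beta>0 j) + complex_of_real (x j i) * R (\<beta>0 j))
                          / (2 * genf K rd (\<beta>0 j))) m)"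
    \<comment> \<open>the first-passage functions F_{n0,m}(t), via their defining ODE system\<close>
    and Fp_init: "\<forall>n0 m. m \<le> c \<longrightarrow> Fp n0 m 0 = 1"
    and Fp_ode: "\<forall>n0 m t. m \<le> c \<longrightarrow> 0 \<le> t \<longrightarrow>
        ((Fp n0 m) has_real_derivative
           ((\<Sum>i\<in>{0..K}. \<Sum>m'\<le>c. Lam c K ra rb rc rd (int i) m m' * Fp n0 m' t)
            + (\<Sum>k\<in>{1..n0}. \<Sum>m'\<le>c. Lam c K ra rb rc rd (- int k) m m' * Fp (n0 - k) m' t)))
        (at t within {0..})"
  shows "\<forall>t\<ge>0.
    (\<Sum>j\<in>{1..K * (c + 1)}. \<gamma> j *
       (\<Sum>n0. \<Sum>m\<le>c. \<beta>0 j ^ n0 *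
          omega c (\<lambda>i. (Fz K ra rb rc rd (\<beta>0 j) + complex_of_real (x j i) * R (\<beta>0 j))
                         / (2 * genf K rd (\<beta>0 j))) m * complex_of_real (Fp n0 m t)))
    = (\<Sum>j\<in>{1..K * (c + 1)}.
         \<gamma> j * (\<Sum>m\<le>c. omega c (\<lambda>i. (Fz K ra rb rc rd (\<beta>0 j) + complex_of_real (x j i) * R (\<beta>0 j))
                         / (2 * genf K rd (\<beta>0 j))) m) / (1 - \<beta>0 j)
         * exp (complex_of_real t * (\<Sum>i\<in>{1..K}. (1 - 1 / \<beta>0 j ^ i) * complex_of_real (lam i))))"
proof -
  obtain Lf where Lf: "0 \<le> Lf" and Fb: "\<forall>n m t. m \<le> c \<longrightarrow> 0 \<le> t \<longrightarrow> \<bar>Fp n m t\<bar> \<le> (real n + 1) * (real c + 1) * exp (Lf * t)"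
    using energy_bound[OF Fp_init Fp_ode Lam_summable[OF A_i]] by blast
  have diag: "\<forall>i\<in>{1..K}. \<forall>m\<le>c. \<forall>m'\<le>c. Lam c K ra rb rc rd (int i) m m' = (if m = m' then lam i else 0)"
    using D_assm by blast
  have per_j: "\<gamma> j *
       (\<Sum>n0. \<Sum>m\<le>c. \<beta>0 j ^ n0 *
          omega c (\<lambda>i. (Fz K ra rb rc rd (\<beta>0 j) + complex_of_real (x j i) * R (\<beta>0 j))
                         / (2 * genf K rd (\<beta>0 j))) m * complex_of_real (Fp n0 m t))
    = \<gamma> j * (\<Sum>m\<le>c. omega c (\<lambda>i. (Fz K ra rb rc rd (\<beta>0 j) + complex_of_real (x j i) * R (\<beta>0 j))
                         / (2 * genf K rd (\<beta>0 j))) m) / (1 - \<beta>0 j)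
         * exp (complex_of_real t * (\<Sum>i\<in>{1..K}. (1 - 1 / \<beta>0 j ^ i) * complex_of_real (lam i)))"
    if j: "j \<in> {1..K * (c + 1)}" and t: "0 \<le> t" for j t
  proof -
    define b where "b = \<beta>0 j"
    define \<beta>v where "\<beta>v = (\<lambda>i. (Fz K ra rb rc rd b + complex_of_real (x j i) * R b) / (2 * genf K rd b))"
    have rp: "(\<eta> j, b) \<in> rootpairs c K ra rb rc rd R"
      using bij_betw_apply[OF pairs j] unfolding b_def by simp
    hence bn: "cmod b < 1" and Seq: "S_eq K ra rb rc rd R (\<eta> j) b"
      unfolding rootpairs_def by auto
    have BC: "Fz K ra rb rc rd b ^ 2 + 4 * genf K ra b * genf K rd b \<noteq> 0" "genf K rd b \<noteq> 0"
      using B_C rp by auto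
    have Rsq: "R b ^ 2 = Fz K ra rb rc rd b ^ 2 + 4 * genf K ra b * genf K rd b"
      using R_sqrt bn by auto
    have b0: "b \<noteq> 0"
    proof
      assume b: "b = 0"
      have K0: "(0::complex) ^ K = 0" using K_pos by simp
      have F0: "Fz K ra rb rc rd b = 0" unfolding b Fz_def genf0 K0 using A_v by simp
      have "R b ^ 2 = 0" using Rsq A_iv F0 unfolding b genf0 by auto
      hence "R b = 0" by simp
      hence "complex_of_real (rb (int K)) + complex_of_real (rc (int K)) = 0"
        using Seq unfolding S_eq_def b genf0 K0 by (simp add: b)
      hence "rb (int K) + rc (int K) = 0" by (metis of_real_add of_real_eq_0_iff)
      thus False using A_v by simp
    qed
    define P where "P = b^K * of_real (genf1 K ra + genf1 K rb)"
    define Q where "Q = b^K * of_real (genf1 K rc + genf1 K rd)"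
    have FPQ: "Fz K ra rb rc rd b = P - Q - genf K rb b + genf K rc b"
      unfolding Fz_def P_def Q_def by (simp add: algebra_simps)
    have xj: "\<forall>i\<in>{1..c}. x j i \<in> {-1, 1}" "- (1 / real c) * (\<Sum>i\<in>{1..c}. x j i) = \<eta> j"
      using x_def j by auto
    have quad: "\<forall>i\<in>{1..c}. genf K rd b * \<beta>v i ^ 2 = (P - Q - genf K rb b + genf K rc b) * \<beta>v i + genf K ra b"
    proof
      fix i assume i: "i \<in> {1..c}"
      have "x j i = -1 \<or> x j i = 1" using xj(1) i by auto
      hence "(complex_of_real (x j i))^2 = 1" by (auto simp: power2_eq_square)
      thus "genf K rd b * \<beta>v i ^ 2 = (P - Q - genf K rb b + genf K rc b) * \<beta>v i + genf K ra b"
        unfolding \<beta>v_def FPQ[symmetric] by (rule quad_alg[OF BC(2) _ Rsq])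
    qed
    have sumg: "(\<Sum>i\<in>{1..c}. genf K rd b * \<beta>v i + genf K rb b - P) = 0"
    proof -
      have "(\<Sum>i\<in>{1..c}. genf K rd b * \<beta>v i + genf K rb b - P)
          = (\<Sum>i\<in>{1..c}. (Fz K ra rb rc rd b / 2 + genf K rb b - P) + R b / 2 * of_real (x j i))"
        unfolding \<beta>v_def using BC(2) by (intro sum.cong refl) (simp add: field_simps)
      also have "\<dots> = of_nat c * (Fz K ra rb rc rd b / 2 + genf K rb b - P) + R b / 2 * of_real (\<Sum>i\<in>{1..c}. x j i)"
        by (simp add: sum.distrib sum_distrib_left)
      also have "(\<Sum>i\<in>{1..c}. x j i) = - real c * \<eta> j"
        using xj(2) c_pos by (simp add: field_simps)
      also have "of_nat c * (Fz K ra rb rc rd b / 2 + genf K rb b - P) + R b / 2 * of_real (- real c * \<eta> j)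
          = of_nat c / 2 * (Fz K ra rb rc rd b + 2 * genf K rb b - 2 * P - of_real (\<eta> j) * R b)"
        by (simp add: algebra_simps)
      also have "Fz K ra rb rc rd b + 2 * genf K rb b - 2 * P - of_real (\<eta> j) * R b = 0"
        using Seq unfolding S_eq_def Fz_def P_def by (simp add: algebra_simps)
      finally show ?thesis by simp
    qed
    have kern: "\<forall>m'\<le>c. (\<lambda>k. b^k * (\<Sum>m\<le>c. omega c \<beta>v m * of_real (Lam c K ra rb rc rd (- int k) m m')))
       sums (- (\<Sum>i\<in>{1..K}. of_real (lam i) / b^i) * omega c \<beta>v m')"
      by (rule kernel[OF c_pos A_i bn b0 diag P_def Q_def quad sumg])
    have zsum: "\<forall>m'\<le>c. summable (\<lambda>k. norm (\<Sum>m\<le>c. omega c \<beta>v m * of_real (Lam c K ra rb rc rd (- int k) m m')))"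
      using zsum_lemma[OF Lam_summable[OF A_i]] by blast
    have "(\<Sum>n. \<Sum>m\<le>c. b^n * omega c \<beta>v m * of_real (Fp n m t))
      = (\<Sum>m\<le>c. omega c \<beta>v m) / (1 - b) * exp (of_real t * (\<Sum>i\<in>{1..K}. (1 - 1 / b^i) * of_real (lam i)))"
      by (rule main_j[OF Fp_init Fp_ode Fb Lf bn diag kern zsum t])
    thus ?thesis unfolding b_def \<beta>v_def by simp
  qed
  show ?thesis
    by (intro allI impI sum.cong refl per_j) auto
qed


end
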